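(* Let $A$ be a connected monounary algebra. Then there are a set $I$ and algebras $B_i\in\mathbf R(A)\cap\mathcal S$, $i\in I$, such that $\mathbf V(A)=\mathbf V(\{B_i:i\in I\})$.
   Context: A monounary algebra is a pair $(A,f)$ with $A$ a nonempty set and $f:A\to A$; a partial monounary algebra allows $f$ to be a partial map. Direct products are coordinatewise. A (partial) monounary algebra is connected if for all $x,y$ there are $m,n\ge0$ with $f^m(x),f^n(y)$ defined and equal. A retract of $A$ is a nonempty subalgebra $M$ such that there is an endomorphism $h:A\to M$ with $h|_M=\mathrm{id}$; $\mathbf R(A)$ is the class of algebras isomorphic to a retract of $A$. A retract variety is a class closed under isomorphisms, retracts and direct products; $\mathbf V(\mathcal K)$ is the smallest retract variety containing $\mathcal K$. For $x\in A$: $f^{-1}(x)=\{y\in\mathrm{dom}f:f(y)=x\}$, $f^{-n}(x)=\bigcup_{z\in f^{-(n-1)}(x)}f^{-1}(z)$, $P(x)=\{x\}\cup\bigcup_{n\ge1}f^{-n}(x)$, regarded as a partial monounary algebra with $f$ restricted to those $y\in P(x)$ with $f(y)$ defined and in $P(x)$. $A^{(\infty)}$ is the set of $x\in A$ admitting $x_0=x,x_1,\dots$ with $f(x_n)=x_{n-1}$ for $n\ge1$; $A'=\{x\in A\setminus A^{(\infty)}: f(x)\in A^{(\infty)}\}$. Condition ($\bigstar$) on $(A,f)$: whenever $x_1,x_2,x_3\in A$ with $f(x_1)=f(x_2)=f(x_3)$ and $P(x_1),P(x_2),P(x_3)$ pairwise isomorphic, then $|\{x_1,x_2,x_3\}|\le2$.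 $\mathcal U^\bigstar_c$ is the class of connected monounary algebras satisfying ($\bigstar$). Special algebras: $Z=(\mathbb Z,k\mapsto k+1)$; for $n\in\mathbb N$, $\underline n=(\mathbb Z_n,k\mapsto k+1\bmod n)$; $E$ has universe $\mathbb Z\cup\{(k,1):k\in\mathbb N\}$ with $f(k)=k+1$ on $\mathbb Z$, $f((k,1))=(k-1,1)$ for $k>1$ and $f((1,1))=0$; $\widehat n$ has universe $\mathbb Z_n\cup\{(k,1):k\in\mathbb N\}$ with $f(k)=k+1\bmod n$ on $\mathbb Z_n$, $f((k,1))=(k-1,1)$ for $k>1$, $f((1,1))=0$. $\mathcal S^{(0)}$ is the class of algebras isomorphic to $Z$, $E$, or to $\underline n$ or $\widehat n$ for some $n\in\mathbb N$; $\mathcal S^{(1)}$ is the class of $A\in\mathcal U^\bigstar_c$ for which there is $a\in A$ with $A'=\{a\}$ and the subalgebra $A\setminus P(a)$ in $\mathcal S^{(0)}$; $\mathcal S^{(2)}$ is the class of $A\in\mathcal U^\bigstar_c$ with $A^{(\infty)}=\emptyset$; $\mathcal S=\mathcal S^{(0)}\cup\mathcal S^{(1)}\cup\mathcal S^{(2)}$. *)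

theory Defs
  imports Main "HOL-Library.FuncSet"
begin

text \<open>A (total) monounary algebra is represented by a nonempty carrier set A
  together with a map f that is closed on A (values of f outside A are irrelevant).\<close>

definition mono_alg :: "'a set \<Rightarrow> ('a \<Rightarrow> 'a) \<Rightarrow> bool" where
  "mono_alg A f \<longleftrightarrow> A \<noteq> {} \<and> f ` A \<subseteq> A"

definition alg_iso :: "'a set \<Rightarrow> ('a \<Rightarrow> 'a) \<Rightarrow> 'b set \<Rightarrow> ('b \<Rightarrow> 'b) \<Rightarrow> bool" where
  "alg_iso A f B g \<longleftrightarrow> (\<exists>h. bij_betw h A B \<and> (\<forall>x\<in>A. h (f x) = g (h x)))"

definition connected_alg :: "'a set \<Rightarrow> ('a \<Rightarrow> 'a) \<Rightarrow> bool" where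
  "connected_alg A f \<longleftrightarrow> (\<forall>x\<in>A. \<forall>y\<in>A. \<exists>m n. (f ^^ m) x = (f ^^ n) y)"

definition retract :: "'a set \<Rightarrow> ('a \<Rightarrow> 'a) \<Rightarrow> 'a set \<Rightarrow> bool" where
  "retract A f M \<longleftrightarrow> M \<noteq> {} \<and> M \<subseteq> A \<and> f ` M \<subseteq> M \<and>
     (\<exists>h. h ` A \<subseteq> M \<and> (\<forall>x\<in>A. h (f x) = f (h x)) \<and> (\<forall>x\<in>M. h x = x))"

definition Pset :: "'a set \<Rightarrow> ('a \<Rightarrow> 'a) \<Rightarrow> 'a \<Rightarrow> 'a set" where
  "Pset A f x = {y \<in> A. \<exists>n. (f ^^ n) y = x}"

text \<open>Domain of the partial operation on a subset S: f restricted to those y with f y \<in> S.\<close>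
definition pdom :: "'a set \<Rightarrow> ('a \<Rightarrow> 'a) \<Rightarrow> 'a set" where
  "pdom S f = {y \<in> S. f y \<in> S}"

definition partial_iso :: "'a set \<Rightarrow> 'a set \<Rightarrow> ('a \<Rightarrow> 'a) \<Rightarrow> bool" where
  "partial_iso S T f \<longleftrightarrow> (\<exists>h. bij_betw h S T \<and>
      (\<forall>y\<in>S. y \<in> pdom S f \<longleftrightarrow> h y \<in> pdom T f) \<and>
      (\<forall>y\<in>pdom S f. h (f y) = f (h y)))"

definition star_cond :: "'a set \<Rightarrow> ('a \<Rightarrow> 'a) \<Rightarrow> bool" where
  "star_cond A f \<longleftrightarrow> (\<forall>x1\<in>A. \<forall>x2\<in>A. \<forall>x3\<in>A.
      f x1 = f x2 \<and> f x2 = f x3 \<and>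
      partial_iso (Pset A f x1) (Pset A f x2) f \<and>
      partial_iso (Pset A f x1) (Pset A f x3) f \<and>
      partial_iso (Pset A f x2) (Pset A f x3) f
      \<longrightarrow> card {x1, x2, x3} \<le> 2)"

definition U_star_c :: "'a set \<Rightarrow> ('a \<Rightarrow> 'a) \<Rightarrow> bool" where
  "U_star_c A f \<longleftrightarrow> mono_alg A f \<and> connected_alg A f \<and> star_cond A f"

definition Ainf :: "'a set \<Rightarrow> ('a \<Rightarrow> 'a) \<Rightarrow> 'a set" where
  "Ainf A f = {x \<in> A. \<exists>s :: nat \<Rightarrow> 'a. s 0 = x \<and> (\<forall>n. s n \<in> A \<and> f (s (Suc n)) = s n)}"

definition Aprime :: "'a set \<Rightarrow> ('a \<Rightarrow> 'a) \<Rightarrow> 'a set" where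
  "Aprime A f = {x \<in> A - Ainf A f. f x \<in> Ainf A f}"

text \<open>The special algebras. Here \<nat> = {1,2,...}.\<close>
definition Z_car :: "int set" where "Z_car = UNIV"
definition Z_fun :: "int \<Rightarrow> int" where "Z_fun k = k + 1"

definition cyc_car :: "nat \<Rightarrow> int set" where "cyc_car n = {0..<int n}"
definition cyc_fun :: "nat \<Rightarrow> int \<Rightarrow> int" where "cyc_fun n k = (k + 1) mod int n"

text \<open>E: Inl k stands for k \<in> \<int>, Inr k for (k,1), k \<ge> 1.\<close>
definition E_car :: "(int + nat) set" where
  "E_car = range Inl \<union> Inr ` {k. k \<ge> 1}"
definition E_fun :: "int + nat \<Rightarrow> int + nat" where
  "E_fun x = (case x of Inl k \<Rightarrow> Inl (k + 1)
                      | Inr k \<Rightarrow> (if k > 1 then Inr (k - 1) else Inl 0))"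

text \<open>hat n: Inl k stands for k \<in> \<int>_n, Inr k for (k,1), k \<ge> 1.\<close>
definition hat_car :: "nat \<Rightarrow> (int + nat) set" where
  "hat_car n = Inl ` {0..<int n} \<union> Inr ` {k. k \<ge> 1}"
definition hat_fun :: "nat \<Rightarrow> int + nat \<Rightarrow> int + nat" where
  "hat_fun n x = (case x of Inl k \<Rightarrow> Inl ((k + 1) mod int n)
                      | Inr k \<Rightarrow> (if k > 1 then Inr (k - 1) else Inl 0))"

definition S0 :: "'a set \<Rightarrow> ('a \<Rightarrow> 'a) \<Rightarrow> bool" where
  "S0 A f \<longleftrightarrow> mono_alg A f \<and>
     (alg_iso A f Z_car Z_fun \<or> alg_iso A f E_car E_fun \<or>
      (\<exists>n\<ge>1. alg_iso A f (cyc_car n) (cyc_fun n)) \<or>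
      (\<exists>n\<ge>1. alg_iso A f (hat_car n) (hat_fun n)))"

definition S1 :: "'a set \<Rightarrow> ('a \<Rightarrow> 'a) \<Rightarrow> bool" where
  "S1 A f \<longleftrightarrow> U_star_c A f \<and>
     (\<exists>a\<in>A. Aprime A f = {a} \<and> S0 (A - Pset A f a) f)"

definition S2 :: "'a set \<Rightarrow> ('a \<Rightarrow> 'a) \<Rightarrow> bool" where
  "S2 A f \<longleftrightarrow> U_star_c A f \<and> Ainf A f = {}"

definition S_class :: "'a set \<Rightarrow> ('a \<Rightarrow> 'a) \<Rightarrow> bool" where
  "S_class A f \<longleftrightarrow> S0 A f \<or> S1 A f \<or> S2 A f"

definition prod_fun :: "'i set \<Rightarrow> ('a \<Rightarrow> 'a) \<Rightarrow> ('i \<Rightarrow> 'a) \<Rightarrow> ('i \<Rightarrow> 'a)" where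
  "prod_fun J f x = restrict (\<lambda>j. f (x j)) J"

text \<open>Membership of (C,g) in V(K) where K = {(M, f) : M \<in> K} is a family of
  subalgebras of one ambient algebra with operation f: (C,g) is isomorphic to a retract
  of a (nonempty) direct product of members of K (with repetitions allowed: index
  (M,k) denotes the k-th copy of M).\<close>
definition in_V :: "'a set set \<Rightarrow> ('a \<Rightarrow> 'a) \<Rightarrow> 'c set \<Rightarrow> ('c \<Rightarrow> 'c) \<Rightarrow> bool" where
  "in_V K f C g \<longleftrightarrow> (\<exists>J :: ('a set \<times> nat) set. J \<noteq> {} \<and> fst ` J \<subseteq> K \<and>
      (\<exists>R. retract (PiE J fst) (prod_fun J f) R \<and> alg_iso C g R (prod_fun J f)))"

end

theory Submission
  imports Defs
begin

lemma funpow_in: "f ` A \<subseteq> A \<Longrightarrow> x \<in> A \<Longrightarrow> (f ^^ n) x \<in> A"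
  by (induction n) auto

lemma funpow_comm: "(f ^^ n) (f x) = f ((f ^^ n) x)"
  by (metis funpow_swap1)

lemma funpow_plus: "(f ^^ m) ((f ^^ n) x) = (f ^^ (m + n)) x"
  by (simp add: funpow_add)


lemma cyc_of_eq:
  assumes "(f ^^ a) x = (f ^^ b) x" "a < b"
  shows "(f ^^ Suc (b - a - 1)) ((f ^^ a) x) = (f ^^ a) x"
proof -
  have "Suc (b - a - 1) + a = b" using assms(2) by simp
  then have "(f ^^ Suc (b - a - 1)) ((f ^^ a) x) = (f ^^ b) x" by (metis funpow_plus)
  then show ?thesis using assms(1) by simp
qed

lemma not_in_D_back:
  assumes "f ` D \<subseteq> D" "(f ^^ n) z \<notin> D" "z \<in> A"
  shows "z \<in> A - D"
proof -
  have "y \<in> D \<Longrightarrow> (f ^^ m) y \<in> D" for y m using assms(1) by (induction m) auto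
  then show ?thesis using assms by blast
qed

lemma Least_Suc_minus:
  assumes "Q n" "\<not> Q 0"
  shows "(LEAST m. Q (Suc m)) = (LEAST m. Q m) - 1"
  using Least_Suc[of Q n, OF assms] by simp

lemma in_V_intro:
  fixes J :: "('a set \<times> nat) set" and X :: "'a set"
  assumes J: "J \<noteq> {}" "fst ` J \<subseteq> K" "\<forall>j\<in>J. f ` fst j \<subseteq> fst j"
    and X: "f ` X \<subseteq> X" "X \<noteq> {}"
    and g: "\<forall>j\<in>J. \<forall>x\<in>X. g j x \<in> fst j \<and> g j (f x) = f (g j x)"
    and k: "\<forall>j\<in>J. \<forall>x\<in>fst j. k j x \<in> X \<and> k j (f x) = f (k j x)"
    and cov: "\<forall>y\<in>X. \<exists>j\<in>J. k j (g j y) = y"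
    and inj: "\<forall>y\<in>X. \<forall>z\<in>X. (\<forall>j\<in>J. g j y = g j z) \<longrightarrow> y = z"
  shows "in_V K f X f"
proof -
  define F where "F = prod_fun J f"
  define P where "P = PiE J fst"
  define e where "e x = restrict (\<lambda>j. g j x) J" for x
  define R where "R = e ` X"
  have Fapp: "F t j = f (t j)" if "j \<in> J" for t j
    using that by (simp add: F_def prod_fun_def)
  have eP: "e x \<in> P" if "x \<in> X" for x
    using g that by (auto simp: e_def P_def)
  have FP: "F t \<in> P" if "t \<in> P" for t
  proof -
    have "\<forall>j\<in>J. f (t j) \<in> fst j"
    proof
      fix j assume "j \<in> J"
      then have "t j \<in> fst j" using that unfolding P_def by (rule PiE_mem[rotated])
      then show "f (t j) \<in> fst j" using J(3) \<open>j \<in> J\<close> by blast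
    qed
    then show ?thesis by (auto simp: F_def prod_fun_def P_def)
  qed
  have Fe: "F (e x) = e (f x)" if "x \<in> X" for x
    using that g by (auto simp: F_def prod_fun_def e_def)
  have einj: "inj_on e X"
  proof (rule inj_onI)
    fix y z assume "y \<in> X" "z \<in> X" "e y = e z"
    then have "\<forall>j\<in>J. g j y = g j z" unfolding e_def by (metis restrict_apply')
    with inj \<open>y \<in> X\<close> \<open>z \<in> X\<close> show "y = z" by blast
  qed
  define ei where "ei = inv_into X e"
  have eiR: "ei t \<in> X" "e (ei t) = t" if "t \<in> R" for t
    using that unfolding R_def ei_def by (auto simp: inv_into_into f_inv_into_f)
  have eie: "ei (e x) = x" if "x \<in> X" for x
    using that einj unfolding ei_def by simp
  have RP: "R \<subseteq> P" using eP R_def by auto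
  have FR: "F t \<in> R" if "t \<in> R" for t
    using that X(1) Fe unfolding R_def by auto
  define sel where "sel y = (SOME j. j \<in> J \<and> k j (g j y) = y)" for y
  have sel: "sel y \<in> J" "k (sel y) (g (sel y) y) = y" if "y \<in> X" for y
    using someI_ex[OF cov[rule_format, OF that, unfolded Bex_def]] unfolding sel_def by auto
  obtain j0 where j0: "j0 \<in> J" using J(1) by blast
  define r where "r t = (if t \<in> R then ei t else if (\<exists>n. (F ^^ n) t \<in> R)
      then k (sel (ei ((F ^^ (LEAST n. (F ^^ n) t \<in> R)) t))) (t (sel (ei ((F ^^ (LEAST n. (F ^^ n) t \<in> R)) t))))
      else k j0 (t j0))" for t
  have FnP: "(F ^^ n) t \<in> P" if "t \<in> P" for t n
    using that FP by (induction n) auto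
  have tjin: "t j \<in> fst j" if "t \<in> P" "j \<in> J" for t j
    using that unfolding P_def by auto
  have rX: "r t \<in> X" if "t \<in> P" for t
  proof -
    show ?thesis
    proof (cases "t \<in> R")
      case True then show ?thesis by (simp add: r_def eiR)
    next
      case False
      show ?thesis
      proof (cases "\<exists>n. (F ^^ n) t \<in> R")
        case True
        let ?n = "LEAST n. (F ^^ n) t \<in> R"
        have "(F ^^ ?n) t \<in> R" using True by (meson LeastI)
        then have "sel (ei ((F ^^ ?n) t)) \<in> J" using sel eiR by blast
        then show ?thesis using False True k tjin[OF that] by (simp add: r_def)
      next
        case F2: False
        then show ?thesis using False k tjin[OF that j0] j0 by (simp add: r_def)
      qed
    qed
  qed
  have re: "r (e x) = x" if "x \<in> X" for x
    using that eie by (simp add: r_def R_def)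
  have rhom: "r (F t) = f (r t)" if tP: "t \<in> P" for t
  proof (cases "t \<in> R")
    case True
    then obtain x where x: "x \<in> X" "t = e x" unfolding R_def by auto
    then show ?thesis using Fe re X(1) by auto
  next
    case tR: False
    show ?thesis
    proof (cases "\<exists>n. (F ^^ n) t \<in> R")
      case True
      then obtain n where n: "(F ^^ n) t \<in> R" by blast
      define N where "N = (LEAST n. (F ^^ n) t \<in> R)"
      have NR: "(F ^^ N) t \<in> R" unfolding N_def using n by (meson LeastI)
      have N0: "N \<noteq> 0" using NR tR by (cases N) auto
      define y where "y = ei ((F ^^ N) t)"
      define j where "j = sel y"
      have yX: "y \<in> X" using NR eiR y_def by auto
      have jJ: "j \<in> J" "k j (g j y) = y" using sel yX j_def by auto
      have rt: "r t = k j (t j)" using tR True by (simp add: r_def N_def[symmetric] y_def[symmetric] j_def[symmetric])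
      show ?thesis
      proof (cases "N = 1")
        case True
        then have FtR: "F t \<in> R" using NR by simp
        then have "F t = e y" using eiR y_def True by simp
        then have "F t j = g j y" using jJ by (simp add: e_def)
        moreover have "r (F t) = y" using FtR eiR y_def True by (simp add: r_def)
        moreover have "f (k j (t j)) = k j (f (t j))" using k jJ tjin[OF tP jJ(1)] by simp
        ultimately show ?thesis using rt Fapp[OF jJ(1)] jJ by simp
      next
        case False
        have comp: "(F ^^ m) (F t) = (F ^^ Suc m) t" for m by (simp add: funpow_swap1)
        have FtR: "F t \<notin> R"
        proof
          assume "F t \<in> R"
          then have "(F ^^ 1) t \<in> R" by simp
          then have "N \<le> 1" unfolding N_def by (meson Least_le)
          with N0 False show False by simp
        qed
        have ex: "\<exists>m. (F ^^ m) (F t) \<in> R" using comp NR N0 by (metis not0_implies_Suc)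
        have L: "(LEAST m. (F ^^ m) (F t) \<in> R) = N - 1"
          unfolding comp N_def using Least_Suc_minus[of "\<lambda>m. (F ^^ m) t \<in> R" n] n tR by simp
        have "(F ^^ (N - 1)) (F t) = (F ^^ N) t" using comp N0 by (metis Suc_pred' neq0_conv)
        then have "r (F t) = k j (F t j)" using FtR ex L by (simp add: r_def y_def[symmetric] j_def[symmetric])
        also have "\<dots> = k j (f (t j))" using Fapp jJ by simp
        also have "\<dots> = f (k j (t j))" using k jJ tjin[OF tP jJ(1)] by simp
        finally show ?thesis using rt by simp
      qed
    next
      case False
      have comp: "(F ^^ m) (F t) = (F ^^ Suc m) t" for m by (simp add: funpow_swap1)
      have FtR: "F t \<notin> R" using False by (metis One_nat_def funpow.simps(2) funpow_0 o_apply)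
      have nex: "\<not> (\<exists>m. (F ^^ m) (F t) \<in> R)" using False comp by metis
      have "r (F t) = k j0 (F t j0)" using FtR nex by (simp add: r_def)
      also have "\<dots> = k j0 (f (t j0))" using Fapp j0 by simp
      also have "\<dots> = f (k j0 (t j0))" using k j0 tjin[OF tP j0] by simp
      finally show ?thesis using tR False by (simp add: r_def)
    qed
  qed
  define \<rho> where "\<rho> t = e (r t)" for t
  have ret: "retract P F R"
    unfolding retract_def
  proof (intro conjI exI[of _ \<rho>])
    show "R \<noteq> {}" using X(2) R_def by auto
    show "R \<subseteq> P" by (rule RP)
    show "F ` R \<subseteq> R" using FR by auto
    show "\<rho> ` P \<subseteq> R" using rX R_def \<rho>_def by auto
    show "\<forall>x\<in>P. \<rho> (F x) = F (\<rho> x)" using rhom rX Fe \<rho>_def by auto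
    show "\<forall>x\<in>R. \<rho> x = x" using re R_def \<rho>_def by auto
  qed
  have iso: "alg_iso X f R F"
    unfolding alg_iso_def
    using einj Fe R_def by (auto simp: bij_betw_def)
  show ?thesis unfolding in_V_def
    using J(1,2) ret iso unfolding P_def F_def by blast
qed


lemma retract_in_V_A:
  assumes "f ` A \<subseteq> A" "retract A f M"
  shows "in_V {A} f M f"
proof -
  from assms(2) obtain h where M: "M \<noteq> {}" "M \<subseteq> A" "f ` M \<subseteq> M" and h: "h ` A \<subseteq> M" "\<forall>x\<in>A. h (f x) = f (h x)" "\<forall>x\<in>M. h x = x"
    unfolding retract_def by blast
  show ?thesis
    apply (rule in_V_intro[where J = "{(A,0)}" and g = "\<lambda>j x. x" and k = "\<lambda>j. h"])
    using assms(1) M h by auto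
qed

lemma retract_trans:
  assumes "retract A f A1" "retract A1 f M"
  shows "retract A f M"
proof -
  from assms(1) obtain h1 where A1: "A1 \<noteq> {}" "A1 \<subseteq> A" "f ` A1 \<subseteq> A1" and h1: "h1 ` A \<subseteq> A1" "\<forall>x\<in>A. h1 (f x) = f (h1 x)" "\<forall>x\<in>A1. h1 x = x"
    unfolding retract_def by blast
  from assms(2) obtain h2 where M: "M \<noteq> {}" "M \<subseteq> A1" "f ` M \<subseteq> M" and h2: "h2 ` A1 \<subseteq> M" "\<forall>x\<in>A1. h2 (f x) = f (h2 x)" "\<forall>x\<in>M. h2 x = x"
    unfolding retract_def by blast
  show ?thesis unfolding retract_def
    apply (intro conjI exI[of _ "h2 \<circ> h1"])
    using A1 h1 M h2 by (auto simp: image_subset_iff)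
qed

lemma back_retract:
  assumes fA: "f ` A \<subseteq> A" and H: "H \<subseteq> A" "H \<noteq> {}" "f ` H \<subseteq> H"
    and \<beta>: "\<forall>y\<in>H. \<beta> y \<in> H \<and> f (\<beta> y) = y"
    and reach: "\<forall>x\<in>A. \<exists>t. (f ^^ t) x \<in> H"
  shows "retract A f H"
proof -
  define T where "T x = (LEAST t. (f ^^ t) x \<in> H)" for x
  define h where "h x = (\<beta> ^^ T x) ((f ^^ T x) x)" for x
  have \<beta>n: "(\<beta> ^^ n) y \<in> H" if "y \<in> H" for y n
    using that \<beta> by (induction n) auto
  have fH: "(f ^^ n) y \<in> H" if "y \<in> H" for y n
    using that H(3) by (induction n) auto
  have TH: "(f ^^ T x) x \<in> H" if "x \<in> A" for x
    unfolding T_def using reach that by (meson LeastI)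
  have hH: "h x \<in> H" if "x \<in> A" for x
    unfolding h_def using TH[OF that] \<beta>n by blast
  have T0: "T x = 0" if "x \<in> H" for x
    unfolding T_def using that by simp
  have hid: "h x = x" if "x \<in> H" for x
    using T0[OF that] unfolding h_def by simp
  have hom: "h (f x) = f (h x)" if xA: "x \<in> A" for x
  proof (cases "x \<in> H")
    case True
    then show ?thesis using hid H(3) by auto
  next
    case False
    obtain n where n: "(f ^^ n) x \<in> H" using reach xA by blast
    have "T x \<noteq> 0" using TH[OF xA] False by (metis funpow_0)
    then obtain m where m: "T x = Suc m" by (cases "T x") auto
    have comp: "(f ^^ k) (f x) = (f ^^ Suc k) x" for k by (simp add: funpow_swap1)
    have "T (f x) = T x - 1"
      unfolding T_def comp using Least_Suc_minus[of "\<lambda>k. (f ^^ k) x \<in> H" n] n False by simp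
    then have Tf: "T (f x) = m" using m by simp
    define y where "y = (f ^^ Suc m) x"
    have yH: "y \<in> H" using TH[OF xA] m y_def by simp
    have "h (f x) = (\<beta> ^^ m) y" unfolding h_def Tf y_def comp by simp
    moreover have "f (h x) = f (\<beta> ((\<beta> ^^ m) y))" unfolding h_def m y_def by simp
    moreover have "f (\<beta> ((\<beta> ^^ m) y)) = (\<beta> ^^ m) y" using \<beta> \<beta>n[OF yH] by blast
    ultimately show ?thesis by simp
  qed
  show ?thesis unfolding retract_def
    apply (intro conjI exI[of _ h])
    using H hH hid hom by auto
qed

definition sim :: "'a set \<Rightarrow> ('a \<Rightarrow> 'a) \<Rightarrow> 'a \<Rightarrow> 'a \<Rightarrow> bool" where
  "sim A f x y \<longleftrightarrow> (\<exists>R. R x y \<and> (\<forall>a b. R a b \<longrightarrow> a \<in> A \<and> b \<in> A \<and>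
       (\<forall>c\<in>A. f c = a \<longrightarrow> (\<exists>d\<in>A. f d = b \<and> R c d))))"

lemma sim_refl: "x \<in> A \<Longrightarrow> sim A f x x"
  unfolding sim_def by (rule exI[of _ "\<lambda>a b. a = b \<and> a \<in> A"]) auto

lemma sim_in: "sim A f x y \<Longrightarrow> x \<in> A \<and> y \<in> A"
  unfolding sim_def by blast

lemma sim_step: "sim A f x y \<Longrightarrow> c \<in> A \<Longrightarrow> f c = x \<Longrightarrow> \<exists>d\<in>A. f d = y \<and> sim A f c d"
  unfolding sim_def by metis

lemma sim_trans:
  assumes "sim A f x y" "sim A f y z" shows "sim A f x z"
proof -
  from assms(1) obtain R where R: "R x y" "\<forall>a b. R a b \<longrightarrow> a \<in> A \<and> b \<in> A \<and>
       (\<forall>c\<in>A. f c = a \<longrightarrow> (\<exists>d\<in>A. f d = b \<and> R c d))" unfolding sim_def by blast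
  from assms(2) obtain S where S: "S y z" "\<forall>a b. S a b \<longrightarrow> a \<in> A \<and> b \<in> A \<and>
       (\<forall>c\<in>A. f c = a \<longrightarrow> (\<exists>d\<in>A. f d = b \<and> S c d))" unfolding sim_def by blast
  show ?thesis unfolding sim_def
  proof (rule exI[of _ "R OO S"], rule conjI)
    show "(R OO S) x z" using R S by blast
  next
    show "\<forall>a b. (R OO S) a b \<longrightarrow> a \<in> A \<and> b \<in> A \<and> (\<forall>c\<in>A. f c = a \<longrightarrow> (\<exists>d\<in>A. f d = b \<and> (R OO S) c d))"
    proof (intro allI impI)
    fix a b assume "(R OO S) a b"
    then obtain m where "R a m" "S m b" by blast
    show "a \<in> A \<and> b \<in> A \<and> (\<forall>c\<in>A. f c = a \<longrightarrow> (\<exists>d\<in>A. f d = b \<and> (R OO S) c d))"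
    proof (intro conjI ballI impI)
      show "a \<in> A" using R(2) \<open>R a m\<close> by blast
      show "b \<in> A" using S(2) \<open>S m b\<close> by blast
      fix c assume "c \<in> A" "f c = a"
      then obtain d where "d \<in> A" "f d = m" "R c d" using R(2) \<open>R a m\<close> by blast
      then obtain e where "e \<in> A" "f e = b" "S d e" using S(2) \<open>S m b\<close> by blast
      then show "\<exists>d\<in>A. f d = b \<and> (R OO S) c d" using \<open>R c d\<close> by blast
    qed
    qed
  qed
qed

lemma sim_hom:
  assumes "x \<in> A" "g ` A \<subseteq> A" "\<forall>z\<in>A. g (f z) = f (g z)"
  shows "sim A f x (g x)"
  unfolding sim_def
  apply (rule exI[of _ "\<lambda>a b. a \<in> A \<and> b = g a"])
  using assms by auto

lemma partial_iso_sym: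
  assumes "partial_iso S T f" shows "partial_iso T S f"
proof -
  from assms obtain \<phi> where \<phi>: "bij_betw \<phi> S T" "\<forall>y\<in>S. y \<in> pdom S f \<longleftrightarrow> \<phi> y \<in> pdom T f"
    "\<forall>y\<in>pdom S f. \<phi> (f y) = f (\<phi> y)" unfolding partial_iso_def by blast
  define \<psi> where "\<psi> = inv_into S \<phi>"
  have \<psi>: "bij_betw \<psi> T S" using \<phi>(1) \<psi>_def by (simp add: bij_betw_inv_into)
  have \<psi>S: "\<psi> y \<in> S" "\<phi> (\<psi> y) = y" if "y \<in> T" for y
    using that \<phi>(1) \<psi>_def by (auto simp: bij_betw_def inv_into_into f_inv_into_f)
  have pd: "y \<in> pdom T f \<longleftrightarrow> \<psi> y \<in> pdom S f" if "y \<in> T" for y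
    using \<phi>(2) \<psi>S[OF that] by auto
  have hom: "\<psi> (f y) = f (\<psi> y)" if "y \<in> pdom T f" for y
  proof -
    have yT: "y \<in> T" using that by (simp add: pdom_def)
    have "\<psi> y \<in> pdom S f" using pd yT that by blast
    then have "f (\<psi> y) \<in> S" "\<phi> (f (\<psi> y)) = f y" using \<phi>(3) \<psi>S[OF yT] by (auto simp: pdom_def)
    moreover have "f y \<in> T" using that by (simp add: pdom_def)
    ultimately show ?thesis using \<phi>(1) \<psi>S by (metis bij_betw_inv_into_left \<psi>_def)
  qed
  show ?thesis unfolding partial_iso_def using \<psi> pd hom by blast
qed

lemma Pset_sub: "Pset M f x \<subseteq> M" by (auto simp: Pset_def)

lemma iso_Ainf:
  assumes fM: "f ` M \<subseteq> M" and iso: "partial_iso (Pset M f x) (Pset M f y) f"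
    and x: "x \<in> Ainf M f" and yM: "y \<in> M"
  shows "y \<in> Ainf M f"
proof -
  from iso obtain \<phi> where \<phi>: "bij_betw \<phi> (Pset M f x) (Pset M f y)"
    "\<forall>z\<in>Pset M f x. z \<in> pdom (Pset M f x) f \<longleftrightarrow> \<phi> z \<in> pdom (Pset M f y) f"
    "\<forall>z\<in>pdom (Pset M f x) f. \<phi> (f z) = f (\<phi> z)" unfolding partial_iso_def by blast
  from x obtain s where s: "s 0 = x" "\<forall>n. s n \<in> M \<and> f (s (Suc n)) = s n" unfolding Ainf_def by blast
  have sP: "(f ^^ n) (s n) = x" for n
  proof (induction n)
    case 0 then show ?case using s by simp
  next
    case (Suc n) then show ?case using s by (simp add: funpow_swap1)
  qed
  have sPx: "s n \<in> Pset M f x" for n using sP s by (auto simp: Pset_def)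
  have xP: "x \<in> Pset M f x" using sPx s(1) by metis
  have "\<phi> x \<in> Pset M f y" using \<phi>(1) xP by (auto simp: bij_betw_def)
  then obtain k where k: "(f ^^ k) (\<phi> x) = y" "\<phi> x \<in> M" unfolding Pset_def by blast
  define w where "w i = (if i \<le> k then (f ^^ (k - i)) (\<phi> x) else \<phi> (s (i - k)))" for i
  have sdom: "s (Suc n) \<in> pdom (Pset M f x) f" for n
    using sPx s by (auto simp: pdom_def)
  have "\<forall>i. w i \<in> M \<and> f (w (Suc i)) = w i"
  proof
    fix i
    have wM: "w i \<in> M"
    proof (cases "i \<le> k")
      case True then show ?thesis using k(2) fM funpow_in w_def by metis
    next
      case False
      have "\<phi> (s (i - k)) \<in> Pset M f y" using \<phi>(1) sPx by (auto simp: bij_betw_def)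
      then show ?thesis using False w_def by (auto simp: Pset_def)
    qed
    have "f (w (Suc i)) = w i"
    proof (cases "Suc i \<le> k")
      case True
      then have "k - i = Suc (k - Suc i)" by simp
      then show ?thesis using True by (simp add: w_def)
    next
      case False
      then have eq: "Suc i - k = Suc (i - k)" by simp
      have "f (w (Suc i)) = f (\<phi> (s (Suc (i - k))))" using False eq by (simp add: w_def)
      also have "\<dots> = \<phi> (s (i - k))" using \<phi>(3) sdom s by metis
      finally show ?thesis
        using False by (cases "i = k") (auto simp: w_def s(1))
    qed
    then show "w i \<in> M \<and> f (w (Suc i)) = w i" using wM by simp
  qed
  moreover have "w 0 = y" using k by (simp add: w_def)
  ultimately show ?thesis unfolding Ainf_def using yM by blast
qed

lemma Pset_root_pdom:
  assumes "f ` M \<subseteq> M" "z \<in> Pset M f x" "z \<noteq> x"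
  shows "z \<in> pdom (Pset M f x) f"
proof -
  from assms obtain n where n: "(f ^^ n) z = x" "z \<in> M" unfolding Pset_def by blast
  with assms(3) obtain m where "n = Suc m" by (cases n) auto
  then have "(f ^^ m) (f z) = x" using n by (simp add: funpow_swap1)
  then show ?thesis using n assms(1) by (auto simp: pdom_def Pset_def)
qed

lemma iso_sim:
  assumes fA: "f ` A \<subseteq> A" and ret: "M \<subseteq> A" "f ` M \<subseteq> M" "h ` A \<subseteq> M" "\<forall>z\<in>A. h (f z) = f (h z)" "\<forall>z\<in>M. h z = z"
    and x1: "x1 \<in> M" "\<forall>n. (f ^^ Suc n) x1 \<noteq> x1" and x2: "x2 \<in> M"
    and iso: "partial_iso (Pset M f x1) (Pset M f x2) f"
  shows "sim A f x1 x2"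
proof -
  from iso obtain \<phi> where \<phi>: "bij_betw \<phi> (Pset M f x1) (Pset M f x2)"
    "\<forall>z\<in>Pset M f x1. z \<in> pdom (Pset M f x1) f \<longleftrightarrow> \<phi> z \<in> pdom (Pset M f x2) f"
    "\<forall>z\<in>pdom (Pset M f x1) f. \<phi> (f z) = f (\<phi> z)" unfolding partial_iso_def by blast
  have x1P: "x1 \<in> Pset M f x1" using x1 by (auto simp: Pset_def intro: exI[of _ 0])
  have x1nd: "x1 \<notin> pdom (Pset M f x1) f"
  proof
    assume "x1 \<in> pdom (Pset M f x1) f"
    then obtain n where "(f ^^ n) (f x1) = x1" by (auto simp: pdom_def Pset_def)
    then have "(f ^^ Suc n) x1 = x1" by (simp add: funpow_swap1)
    with x1 show False by blast
  qed
  have \<phi>x1: "\<phi> x1 = x2"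
  proof (rule ccontr)
    assume ne: "\<phi> x1 \<noteq> x2"
    have "\<phi> x1 \<in> Pset M f x2" using \<phi>(1) x1P by (auto simp: bij_betw_def)
    then have "\<phi> x1 \<in> pdom (Pset M f x2) f" using Pset_root_pdom[OF ret(2) _ ne] by blast
    with \<phi>(2) x1P x1nd show False by blast
  qed
  have hP: "h a \<in> Pset M f x1" if "a \<in> Pset A f x1" for a
  proof -
    from that obtain n where n: "(f ^^ n) a = x1" "a \<in> A" unfolding Pset_def by blast
    have "h ((f ^^ n) a) = (f ^^ n) (h a)" for n
    proof (induction n)
      case (Suc n)
      have "(f ^^ n) a \<in> A" using n(2) fA funpow_in by metis
      then show ?case using Suc ret(4) by simp
    qed simp
    then have "(f ^^ n) (h a) = x1" using n ret(5) x1 by metis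
    then show ?thesis using ret(3) n(2) by (auto simp: Pset_def)
  qed
  define R where "R a b \<longleftrightarrow> a \<in> Pset A f x1 \<and> b = \<phi> (h a)" for a b
  show ?thesis unfolding sim_def
  proof (rule exI[of _ R], rule conjI)
    show "R x1 x2" using x1 ret \<phi>x1 by (auto simp: R_def Pset_def intro: exI[of _ 0])
  next
    show "\<forall>a b. R a b \<longrightarrow> a \<in> A \<and> b \<in> A \<and> (\<forall>c\<in>A. f c = a \<longrightarrow> (\<exists>d\<in>A. f d = b \<and> R c d))"
    proof (intro allI impI)
    fix a b assume Rab: "R a b"
    then have aP: "a \<in> Pset A f x1" and b: "b = \<phi> (h a)" by (auto simp: R_def)
    have bP: "b \<in> Pset M f x2" using \<phi>(1) hP[OF aP] b by (auto simp: bij_betw_def)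
    show "a \<in> A \<and> b \<in> A \<and> (\<forall>c\<in>A. f c = a \<longrightarrow> (\<exists>d\<in>A. f d = b \<and> R c d))"
    proof (intro conjI ballI impI)
      show "a \<in> A" using aP by (auto simp: Pset_def)
      show "b \<in> A" using bP ret(1) by (auto simp: Pset_def)
      fix c assume c: "c \<in> A" "f c = a"
      have cP: "c \<in> Pset A f x1" using aP c
        by (auto simp: Pset_def) (metis funpow_Suc_right o_apply)
      have hc: "h c \<in> Pset M f x1" using hP[OF cP] .
      have "f (h c) = h a" using ret(4) c by metis
      then have hcd: "h c \<in> pdom (Pset M f x1) f" using hc hP[OF aP] by (auto simp: pdom_def)
      then have "\<phi> (h a) = f (\<phi> (h c))" using \<phi>(3) \<open>f (h c) = h a\<close> by metis
      moreover have "\<phi> (h c) \<in> A"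
      proof -
        have "\<phi> (h c) \<in> Pset M f x2" using \<phi>(1) hc by (auto simp: bij_betw_def)
        then show ?thesis using ret(1) by (auto simp: Pset_def)
      qed
      ultimately show "\<exists>d\<in>A. f d = b \<and> R c d" using b cP by (auto simp: R_def)
    qed
    qed
  qed
qed


lemma prune:
  assumes fA: "f ` A \<subseteq> A" and D: "D \<subseteq> A" "f ` D \<subseteq> D"
    and reach: "\<forall>z\<in>A. \<exists>n. (f ^^ n) z \<in> D"
    and acyc: "\<forall>z\<in>A - D. \<forall>n. (f ^^ Suc n) z \<noteq> z"
    and uv: "u \<in> A - D" "v \<in> A - D" "f u = f v"
  shows "\<exists>M h. D \<subseteq> M \<and> M \<subseteq> A \<and> f ` M \<subseteq> M \<and> u \<in> M \<and> v \<in> M \<and> h ` A \<subseteq> M \<and>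
     (\<forall>z\<in>A. h (f z) = f (h z)) \<and> (\<forall>z\<in>M. h z = z) \<and>
     (\<forall>x\<in>M - D. \<forall>y\<in>M - D. f x = f y \<and> sim A f x y \<and> sim A f y x \<longrightarrow> x = y \<or> (x \<in> {u,v} \<and> y \<in> {u,v}))"
proof -
  define eqv where "eqv x y \<longleftrightarrow> f x = f y \<and> sim A f x y \<and> sim A f y x" for x y
  define cls where "cls z = {y \<in> A - D. eqv z y}" for z
  define Fx where "Fx = {u, v} \<union> {(f ^^ Suc k) u | k. True}"
  define \<rho> where "\<rho> z = (if z \<in> Fx then z else if (\<exists>w\<in>Fx. w \<in> cls z) then (SOME w. w \<in> Fx \<and> w \<in> cls z)
        else (SOME y. y \<in> cls z))" for z
  have eqv_refl: "eqv x x" if "x \<in> A" for x using that sim_refl by (auto simp: eqv_def)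
  have eqv_sym: "eqv x y \<Longrightarrow> eqv y x" for x y by (auto simp: eqv_def)
  have eqv_trans: "eqv x y \<Longrightarrow> eqv y z \<Longrightarrow> eqv x z" for x y z
    unfolding eqv_def using sim_trans by metis
  have cls_eq: "cls x = cls y" if "eqv x y" for x y
    using that eqv_sym eqv_trans unfolding cls_def by blast
  have self_cls: "z \<in> cls z" if "z \<in> A - D" for z using that eqv_refl by (auto simp: cls_def)
  have \<rho>1: "\<rho> z \<in> cls z" if "z \<in> A - D" for z
  proof -
    consider "z \<in> Fx" | "z \<notin> Fx" "\<exists>w\<in>Fx. w \<in> cls z" | "z \<notin> Fx" "\<not>(\<exists>w\<in>Fx. w \<in> cls z)" by blast
    then show ?thesis
    proof cases
      case 1 then show ?thesis using self_cls that by (simp add: \<rho>_def)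
    next
      case 2
      have "\<rho> z = (SOME w. w \<in> Fx \<and> w \<in> cls z)" using 2 unfolding \<rho>_def by simp
      moreover have "(SOME w. w \<in> Fx \<and> w \<in> cls z) \<in> cls z" using 2(2) by (metis (mono_tags, lifting) someI_ex)
      ultimately show ?thesis by simp
    next
      case 3
      have "\<rho> z = (SOME w. w \<in> cls z)" using 3 unfolding \<rho>_def by simp
      moreover have "(SOME w. w \<in> cls z) \<in> cls z" using self_cls[OF that] by (metis someI_ex)
      ultimately show ?thesis by simp
    qed
  qed
  have \<rho>2: "\<rho> (\<rho> z) = \<rho> z" if "z \<in> A - D" for z
  proof -
    consider "z \<in> Fx" | "z \<notin> Fx" "\<exists>w\<in>Fx. w \<in> cls z" | "z \<notin> Fx" "\<not>(\<exists>w\<in>Fx. w \<in> cls z)" by blast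
    then show ?thesis
    proof cases
      case 1 then show ?thesis by (simp add: \<rho>_def)
    next
      case 2
      have "\<rho> z = (SOME w. w \<in> Fx \<and> w \<in> cls z)" using 2 unfolding \<rho>_def by simp
      moreover have "(SOME w. w \<in> Fx \<and> w \<in> cls z) \<in> Fx" using 2(2) by (metis (mono_tags, lifting) someI_ex)
      ultimately have "\<rho> z \<in> Fx" by simp
      then show ?thesis unfolding \<rho>_def by simp
    next
      case 3
      have y0: "\<rho> z = (SOME y. y \<in> cls z)" using 3 unfolding \<rho>_def by simp
      have yc: "\<rho> z \<in> cls z" using \<rho>1 that by blast
      then have ce: "cls (\<rho> z) = cls z" using cls_eq by (auto simp: cls_def)
      have nF: "\<rho> z \<notin> Fx" using 3 yc by blast
      have nw: "\<not>(\<exists>w\<in>Fx. w \<in> cls (\<rho> z))" using 3 ce by simp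
      have "\<rho> (\<rho> z) = (SOME y. y \<in> cls (\<rho> z))" using nF nw unfolding \<rho>_def[of "\<rho> z"] by simp
      then show ?thesis using ce y0 by simp
    qed
  qed
  have \<rho>3: "x = y \<or> (x \<in> Fx \<and> y \<in> Fx)" if "x \<in> A - D" "y \<in> A - D" "eqv x y" "\<rho> x = x" "\<rho> y = y" for x y
  proof -
    have main: "x = y" if "x \<in> A - D" "y \<in> A - D" "eqv x y" "\<rho> x = x" "\<rho> y = y" "x \<notin> Fx" for x y
    proof -
      have nw: "\<not>(\<exists>w\<in>Fx. w \<in> cls x)"
      proof
        assume a: "\<exists>w\<in>Fx. w \<in> cls x"
        have "\<rho> x = (SOME w. w \<in> Fx \<and> w \<in> cls x)" using \<open>x \<notin> Fx\<close> a unfolding \<rho>_def by simp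
        moreover have "(SOME w. w \<in> Fx \<and> w \<in> cls x) \<in> Fx" using a by (metis (mono_tags, lifting) someI_ex)
        ultimately have "\<rho> x \<in> Fx" by simp
        with that(4,6) show False by simp
      qed
      have r: "\<rho> x = (SOME y. y \<in> cls x)" using nw \<open>x \<notin> Fx\<close> unfolding \<rho>_def by simp
      have xs: "x = (SOME y. y \<in> cls x)" using r that(4) by simp
      have yc: "y \<in> cls x" using that(2,3) by (auto simp: cls_def)
      have ce: "cls y = cls x" using cls_eq that(3) eqv_sym by metis
      have yF: "y \<notin> Fx" using nw yc by blast
      have nw2: "\<not>(\<exists>w\<in>Fx. w \<in> cls y)" using nw ce by simp
      have "\<rho> y = (SOME z. z \<in> cls y)" using yF nw2 unfolding \<rho>_def by simp
      then have "y = (SOME z. z \<in> cls x)" using ce that(5) by simp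
      then show ?thesis using xs by simp
    qed
    show ?thesis
    proof (cases "x \<in> Fx \<and> y \<in> Fx")
      case True then show ?thesis by simp
    next
      case False
      then show ?thesis using main[of x y] main[of y x] that eqv_sym by metis
    qed
  qed
  define M where "M = {z \<in> A. \<forall>k. (f ^^ k) z \<notin> D \<longrightarrow> \<rho> ((f ^^ k) z) = (f ^^ k) z}"
  have DM: "D \<subseteq> M"
  proof
    fix z assume "z \<in> D"
    then have "(f ^^ k) z \<in> D" for k using D(2) by (induction k) auto
    then show "z \<in> M" using \<open>z \<in> D\<close> D(1) by (auto simp: M_def)
  qed
  have MA: "M \<subseteq> A" by (auto simp: M_def)
  have comp: "(f ^^ k) (f z) = (f ^^ Suc k) z" for k z by (simp add: funpow_swap1)
  have fM: "f ` M \<subseteq> M"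
  proof
    fix y assume "y \<in> f ` M"
    then obtain z where z: "z \<in> M" "y = f z" by blast
    have H: "\<forall>k. (f ^^ k) z \<notin> D \<longrightarrow> \<rho> ((f ^^ k) z) = (f ^^ k) z" using z by (simp add: M_def)
    have "(f ^^ k) (f z) \<notin> D \<longrightarrow> \<rho> ((f ^^ k) (f z)) = (f ^^ k) (f z)" for k
      using H by (simp only: comp) blast
    then show "y \<in> M" using fA z MA by (auto simp: M_def)
  qed
  have up: "x \<in> M" if "x \<in> A" "x \<in> D \<or> \<rho> x = x" "f x \<in> M" for x
  proof -
    have "(f ^^ k) x \<notin> D \<longrightarrow> \<rho> ((f ^^ k) x) = (f ^^ k) x" for k
    proof (cases k)
      case 0 then show ?thesis using that by auto
    next
      case (Suc m)
      have H: "\<forall>k. (f ^^ k) (f x) \<notin> D \<longrightarrow> \<rho> ((f ^^ k) (f x)) = (f ^^ k) (f x)" using that(3) by (simp add: M_def)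
      show ?thesis unfolding Suc using H[unfolded comp] by blast
    qed
    then show ?thesis using that by (auto simp: M_def)
  qed
  have \<rho>Fx: "\<rho> z = z" if "z \<in> Fx" for z using that unfolding \<rho>_def by simp
  have uFx: "(f ^^ Suc k) u \<in> Fx" for k unfolding Fx_def by blast
  have uFx0: "(f ^^ k) u \<in> Fx" for k
  proof (cases k)
    case 0 then show ?thesis unfolding Fx_def by simp
  next
    case (Suc m) then show ?thesis using uFx by simp
  qed
  have vFx0: "(f ^^ k) v \<in> Fx" for k
  proof (cases k)
    case 0 then show ?thesis unfolding Fx_def by simp
  next
    case (Suc m)
    have "(f ^^ k) v = (f ^^ Suc m) u" using Suc comp[symmetric] uv(3) by metis
    then show ?thesis using uFx by simp
  qed
  have uM: "u \<in> M" using uv uFx0 \<rho>Fx unfolding M_def by blast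
  have vM: "v \<in> M" using uv vFx0 \<rho>Fx unfolding M_def by blast
  define dist where "dist z = (LEAST n. (f ^^ n) z \<in> D)" for z
  define \<rho>' where "\<rho>' z = (if z \<in> D then z else \<rho> z)" for z
  define hh where "hh = rec_nat (\<lambda>z. z) (\<lambda>n H z. if z \<in> M then z else \<rho>' (SOME c. c \<in> A \<and> f c = H (f z) \<and> sim A f z c))"
  have hh0: "hh 0 z = z" for z by (simp add: hh_def)
  have hhS: "hh (Suc n) z = (if z \<in> M then z else \<rho>' (SOME c. c \<in> A \<and> f c = hh n (f z) \<and> sim A f z c))" for n z
    by (simp add: hh_def)
  define h where "h z = hh (dist z) z" for z
  have distD: "(f ^^ dist z) z \<in> D" if "z \<in> A" for z
    unfolding dist_def using reach that by (meson LeastI)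
  have dist0: "dist z = 0 \<longleftrightarrow> z \<in> D" if "z \<in> A" for z
    using distD[OF that] unfolding dist_def by (metis (mono_tags, lifting) LeastI_ex funpow_0 not_less_Least zero_less_iff_neq_zero)
  have distf: "dist (f z) = dist z - 1" if "z \<in> A" "z \<notin> D" for z
  proof -
    obtain n where n: "(f ^^ n) z \<in> D" using reach \<open>z \<in> A\<close> by blast
    have z0: "\<not> (f ^^ 0) z \<in> D" using that by simp
    have "dist (f z) = (LEAST k. (f ^^ Suc k) z \<in> D)" unfolding dist_def by (simp only: comp)
    also have "\<dots> = (LEAST k. (f ^^ k) z \<in> D) - 1" by (rule Least_Suc_minus[of "\<lambda>k. (f ^^ k) z \<in> D" n, OF n z0])
    finally show ?thesis unfolding dist_def .
  qed
  have main: "\<forall>z\<in>A. dist z = n \<longrightarrow> h z \<in> M \<and> sim A f z (h z) \<and> f (h z) = h (f z) \<and> (z \<in> M \<longrightarrow> h z = z)" for n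
  proof (induction n)
    case 0
    show ?case
    proof (intro ballI impI)
      fix z assume z: "z \<in> A" "dist z = 0"
      then have zD: "z \<in> D" using dist0 by blast
      then have fzD: "f z \<in> D" using D(2) by blast
      then have "dist (f z) = 0" using dist0 D(1) by blast
      then have hfz: "h (f z) = f z" by (simp add: h_def hh0)
      have hz: "h z = z" using z(2) by (simp add: h_def hh0)
      show "h z \<in> M \<and> sim A f z (h z) \<and> f (h z) = h (f z) \<and> (z \<in> M \<longrightarrow> h z = z)"
        using hz hfz zD DM sim_refl[OF z(1)] by auto
    qed
  next
    case (Suc m)
    show ?case
    proof (intro ballI impI)
      fix z assume z: "z \<in> A" "dist z = Suc m"
      then have zD: "z \<notin> D" using dist0[OF z(1)] by simp
      have fzA: "f z \<in> A" using fA z by blast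
      have df: "dist (f z) = m" using distf z zD by simp
      have IH: "h (f z) \<in> M" "sim A f (f z) (h (f z))" "f z \<in> M \<longrightarrow> h (f z) = f z"
        using Suc fzA df by auto
      have hfz: "h (f z) = hh m (f z)" using df by (simp add: h_def)
      have hz: "h z = (if z \<in> M then z else \<rho>' (SOME c. c \<in> A \<and> f c = hh m (f z) \<and> sim A f z c))"
        using z by (simp add: h_def hhS)
      show "h z \<in> M \<and> sim A f z (h z) \<and> f (h z) = h (f z) \<and> (z \<in> M \<longrightarrow> h z = z)"
      proof (cases "z \<in> M")
        case True
        then have "f z \<in> M" using fM by blast
        then show ?thesis using True hz IH sim_refl z by auto
      next
        case False
        have ex: "\<exists>c. c \<in> A \<and> f c = hh m (f z) \<and> sim A f z c"
          using sim_step[OF IH(2) z(1)] hfz by auto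
        define c0 where "c0 = (SOME c. c \<in> A \<and> f c = hh m (f z) \<and> sim A f z c)"
        have c0: "c0 \<in> A" "f c0 = h (f z)" "sim A f z c0"
          using someI_ex[OF ex] hfz unfolding c0_def by auto
        have hz2: "h z = \<rho>' c0" using hz False c0_def by simp
        show ?thesis
        proof (cases "c0 \<in> D")
          case True
          then show ?thesis using hz2 c0 DM False by (auto simp: \<rho>'_def)
        next
          case cD: False
          have e: "eqv c0 (\<rho> c0)" "\<rho> c0 \<in> A - D" using \<rho>1[of c0] c0 cD by (auto simp: cls_def)
          have "\<rho> (\<rho> c0) = \<rho> c0" using \<rho>2 c0 cD by blast
          moreover have "f (\<rho> c0) = h (f z)" using e c0 by (simp add: eqv_def)
          ultimately have "\<rho> c0 \<in> M" using up[of "\<rho> c0"] e IH by auto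
          moreover have "sim A f z (\<rho> c0)" using sim_trans c0(3) e by (auto simp: eqv_def)
          ultimately show ?thesis using hz2 cD False \<open>f (\<rho> c0) = h (f z)\<close> by (simp add: \<rho>'_def)
        qed
      qed
    qed
  qed
  have hM: "h z \<in> M" and hhom: "h (f z) = f (h z)" and hid: "z \<in> M \<Longrightarrow> h z = z" if "z \<in> A" for z
    using main[of "dist z"] that by auto
  have \<rho>3': "x = y \<or> (x \<in> {u,v} \<and> y \<in> {u,v})"
    if "x \<in> M - D" "y \<in> M - D" "f x = f y" "sim A f x y" "sim A f y x" for x y
  proof -
    have xy: "x \<in> A - D" "y \<in> A - D" using that MA by auto
    have "\<rho> x = x" "\<rho> y = y" using that by (auto simp: M_def dest: spec[of _ 0])
    then have c: "x = y \<or> (x \<in> Fx \<and> y \<in> Fx)" using \<rho>3[OF xy] that by (auto simp: eqv_def)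
    have nfx: "w \<in> {u,v}" if "w \<in> Fx" "w' \<in> Fx" "f w = f w'" "w \<noteq> w'" "w \<in> A - D" "w' \<in> A - D" for w w'
    proof (rule ccontr)
      note th = that
      assume "w \<notin> {u,v}"
      then obtain k where k: "w = (f ^^ Suc k) u" using th(1) by (auto simp: Fx_def)
      have fw: "f w = (f ^^ Suc (Suc k)) u" using k by simp
      have uA: "u \<in> A" using uv by blast
      consider "w' \<in> {u, v}" | j where "w' = (f ^^ Suc j) u" using th(2) by (auto simp: Fx_def)
      then show False
      proof cases
        case 1
        then have "f w' = (f ^^ 1) u" using uv by auto
        then have eq: "(f ^^ 1) u = (f ^^ Suc (Suc k)) u" using that(3) fw by simp
        have c: "(f ^^ Suc k) (f u) = f u" using cyc_of_eq[OF eq] by simp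
        have wk: "(f ^^ k) (f u) = w" using k comp by simp
        have "f u \<in> A - D"
          using not_in_D_back[OF D(2), of k "f u" A] wk th(5) fA uA by blast
        then show False using acyc c by blast
      next
        case 2
        have ne: "j \<noteq> k" using that(4) k 2 by blast
        have eq: "(f ^^ Suc (Suc k)) u = (f ^^ Suc (Suc j)) u" using that(3) fw 2 by simp
        have gen: False if "a < b" "(f ^^ Suc (Suc a)) u = (f ^^ Suc (Suc b)) u" "(f ^^ Suc b) u \<in> A - D" for a b
        proof -
          have c: "(f ^^ Suc (b - a - 1)) ((f ^^ Suc (Suc a)) u) = (f ^^ Suc (Suc a)) u"
            using cyc_of_eq[OF that(2)] that(1) by simp
          have ab: "b - a - 1 + Suc (Suc a) = Suc b" using that(1) by simp
          have e: "(f ^^ (b - a - 1)) ((f ^^ Suc (Suc a)) u) = (f ^^ Suc b) u"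
            by (metis ab funpow_plus)
          have "(f ^^ Suc (Suc a)) u \<in> A - D"
            using not_in_D_back[OF D(2), of "b - a - 1" "(f ^^ Suc (Suc a)) u" A] e that(3) fA uA funpow_in
            by (metis DiffD1 DiffD2 DiffI)
          then show False using acyc c by blast
        qed
        show False
        proof (cases "j < k")
          case True then show False using gen[of j k] eq that(5) k by metis
        next
          case False then show False using gen[of k j] eq ne that(6) 2 by (metis linorder_neqE_nat)
        qed
      qed
    qed
    show ?thesis
    proof (cases "x = y")
      case True then show ?thesis by simp
    next
      case False
      then have "x \<in> Fx" "y \<in> Fx" using c by auto
      then show ?thesis using nfx[of x y] nfx[of y x] False that xy by metis
    qed
  qed
  show ?thesis
    apply (rule exI[of _ M], rule exI[of _ h])
    using DM MA fM uM vM hM hhom hid \<rho>3' by blast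
qed


definition core0 :: "'a set \<Rightarrow> ('a \<Rightarrow> 'a) \<Rightarrow> 'a set \<Rightarrow> bool" where
  "core0 A f H \<longleftrightarrow> H \<subseteq> Ainf A f \<and> retract A f H \<and> S0 H f \<and>
     (\<forall>q\<in>H. \<exists>a b. \<forall>x\<in>H. f x = q \<longrightarrow> x = a \<or> x = b) \<and> (\<forall>x\<in>H. x \<in> Ainf H f)"

definition isret :: "'a set \<Rightarrow> ('a \<Rightarrow> 'a) \<Rightarrow> 'a set \<Rightarrow> ('a \<Rightarrow> 'a) \<Rightarrow> bool" where
  "isret A f M h \<longleftrightarrow> h ` A \<subseteq> M \<and> (\<forall>x\<in>A. h (f x) = f (h x)) \<and> (\<forall>x\<in>M. h x = x)"

definition goodret :: "'a set \<Rightarrow> ('a \<Rightarrow> 'a) \<Rightarrow> 'a set \<Rightarrow> ('a \<Rightarrow> 'a) \<Rightarrow> bool" where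
  "goodret A f M h \<longleftrightarrow> (\<forall>x\<in>A. x \<notin> M \<and> f x \<in> Ainf M f \<longrightarrow> h x \<in> Ainf M f)"

definition retr :: "'a set \<Rightarrow> ('a \<Rightarrow> 'a) \<Rightarrow> 'a set \<Rightarrow> ('a \<Rightarrow> 'a)" where
  "retr A f M = (if \<exists>h. isret A f M h \<and> goodret A f M h then SOME h. isret A f M h \<and> goodret A f M h
     else SOME h. isret A f M h)"

lemma retract_isret: "retract A f M \<longleftrightarrow> M \<noteq> {} \<and> M \<subseteq> A \<and> f ` M \<subseteq> M \<and> (\<exists>h. isret A f M h)"
  unfolding retract_def isret_def by (rule refl)

lemma retr_isret: "retract A f M \<Longrightarrow> isret A f M (retr A f M)"
proof -
  assume "retract A f M"
  then have "\<exists>h. isret A f M h" by (simp add: retract_isret)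
  then obtain h where h: "isret A f M h" by blast
  show ?thesis
  proof (cases "\<exists>h. isret A f M h \<and> goodret A f M h")
    case True
    have "isret A f M (SOME h. isret A f M h \<and> goodret A f M h) \<and> goodret A f M (SOME h. isret A f M h \<and> goodret A f M h)"
      using someI_ex[OF True] .
    then show ?thesis by (simp add: retr_def True)
  next
    case False
    have "isret A f M (SOME h. isret A f M h)" using someI[of "isret A f M" h] h .
    then show ?thesis unfolding retr_def using False by (simp only: if_False)
  qed
qed

lemma retr_good: assumes "isret A f M h" "goodret A f M h" shows "goodret A f M (retr A f M)"
proof -
  have ex: "\<exists>h. isret A f M h \<and> goodret A f M h" using assms by blast
  have "isret A f M (SOME h. isret A f M h \<and> goodret A f M h) \<and> goodret A f M (SOME h. isret A f M h \<and> goodret A f M h)"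
    using someI_ex[OF ex] .
  then show ?thesis by (simp add: retr_def ex)
qed

lemma back_Ainf:
  assumes "H \<subseteq> A" "\<forall>y\<in>H. \<beta> y \<in> H \<and> f (\<beta> y) = y" "y \<in> H"
  shows "y \<in> Ainf H f"
proof -
  have "(\<beta> ^^ n) y \<in> H" for n using assms by (induction n) auto
  then show ?thesis unfolding Ainf_def using assms(2,3)
    by (auto intro!: exI[of _ "\<lambda>n. (\<beta> ^^ n) y"])
qed

locale ca =
  fixes A :: "'a set" and f :: "'a \<Rightarrow> 'a"
  assumes fA: "f ` A \<subseteq> A" and ne: "A \<noteq> {}"
    and conn: "\<forall>x\<in>A. \<forall>y\<in>A. \<exists>m n. (f ^^ m) x = (f ^^ n) y"
begin

abbreviation "K \<equiv> Ainf A f"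

lemma fin: "x \<in> A \<Longrightarrow> f x \<in> A" using fA by blast

lemma powin: "x \<in> A \<Longrightarrow> (f ^^ n) x \<in> A" using fA funpow_in by metis

lemma pow_closed: "f ` H \<subseteq> H \<Longrightarrow> x \<in> H \<Longrightarrow> (f ^^ n) x \<in> H"
  by (induction n) auto

lemma reach_sub:
  assumes "H \<subseteq> A" "H \<noteq> {}" "f ` H \<subseteq> H" "x \<in> A"
  shows "\<exists>t. (f ^^ t) x \<in> H"
proof -
  obtain w where w: "w \<in> H" using assms(2) by blast
  then obtain m n where "(f ^^ m) x = (f ^^ n) w" using conn assms by blast
  moreover have "(f ^^ n) w \<in> H" using pow_closed[OF assms(3) w] .
  ultimately show ?thesis by metis
qed

lemma sub_connected:
  assumes "H \<subseteq> A"
  shows "connected_alg H f"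
  unfolding connected_alg_def using conn assms by blast

lemma Ainf_mono: "M \<subseteq> N \<Longrightarrow> Ainf M f \<subseteq> Ainf N f"
  unfolding Ainf_def by blast

lemma Ainf_sub: "Ainf M f \<subseteq> M"
  unfolding Ainf_def by blast

lemma Ainf_f: assumes "x \<in> Ainf M f" "f ` M \<subseteq> M" shows "f x \<in> Ainf M f"
proof -
  from assms obtain s where s: "s 0 = x" "\<forall>n. s n \<in> M \<and> f (s (Suc n)) = s n" unfolding Ainf_def by blast
  define t where "t n = (if n = 0 then f x else s (n - 1))" for n
  have "t 0 = f x" "\<forall>n. t n \<in> M \<and> f (t (Suc n)) = t n"
    using s assms(2) by (auto simp: t_def) (metis One_nat_def Suc_pred)
  moreover have "f x \<in> M" using s assms(2) by blast
  ultimately show ?thesis unfolding Ainf_def by blast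
qed

lemma Ainf_pow: "x \<in> Ainf M f \<Longrightarrow> f ` M \<subseteq> M \<Longrightarrow> (f ^^ n) x \<in> Ainf M f"
  by (induction n) (auto intro: Ainf_f)

lemma cyc_Ainf:
  assumes "x \<in> A" "(f ^^ Suc n) x = x"
  shows "x \<in> K"
proof -
  define \<sigma> where "\<sigma> j = (f ^^ (n * j)) x" for j
  have "f (\<sigma> (Suc j)) = \<sigma> j" for j
  proof -
    have "f (\<sigma> (Suc j)) = (f ^^ Suc (n * Suc j)) x" by (simp add: \<sigma>_def)
    moreover have "Suc (n * Suc j) = n * j + Suc n" by simp
    ultimately have "f (\<sigma> (Suc j)) = (f ^^ (n * j)) ((f ^^ Suc n) x)" by (metis funpow_plus)
    then show ?thesis using assms(2) \<sigma>_def by simp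
  qed
  moreover have "\<sigma> j \<in> A" for j using powin assms(1) \<sigma>_def by simp
  ultimately show ?thesis unfolding Ainf_def using assms(1) by (auto intro!: exI[of _ \<sigma>] simp: \<sigma>_def)
qed

lemma Pset_notK:
  assumes "a \<notin> K" "z \<in> Pset A f a"
  shows "z \<notin> K"
proof
  assume "z \<in> K"
  from assms(2) obtain n where "(f ^^ n) z = a" unfolding Pset_def by blast
  with Ainf_pow[OF \<open>z \<in> K\<close> fA] assms(1) show False by metis
qed

definition chn :: "'a \<Rightarrow> nat \<Rightarrow> 'a" where
  "chn x = (SOME \<sigma>. \<sigma> 0 = x \<and> (\<forall>n. \<sigma> n \<in> A \<and> f (\<sigma> (Suc n)) = \<sigma> n))"

lemma chn: assumes "x \<in> K" shows "chn x 0 = x" "chn x n \<in> A" "f (chn x (Suc n)) = chn x n"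
proof -
  have "\<exists>\<sigma>. \<sigma> 0 = x \<and> (\<forall>n. \<sigma> n \<in> A \<and> f (\<sigma> (Suc n)) = \<sigma> n)" using assms unfolding Ainf_def by blast
  then have "chn x 0 = x \<and> (\<forall>n. chn x n \<in> A \<and> f (chn x (Suc n)) = chn x n)"
    unfolding chn_def by (rule someI_ex)
  then show "chn x 0 = x" "chn x n \<in> A" "f (chn x (Suc n)) = chn x n" by auto
qed

lemma chn_pow: assumes "x \<in> K" shows "(f ^^ m) (chn x (m + j)) = chn x j"
proof (induction m)
  case (Suc m)
  have "(f ^^ Suc m) (chn x (Suc m + j)) = (f ^^ m) (f (chn x (Suc (m + j))))"
    by (simp add: funpow_swap1)
  then show ?case using Suc chn(3)[OF assms] by simp
qed simp

lemma chn_K: assumes "x \<in> K" shows "chn x n \<in> K"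
proof -
  define t where "t j = chn x (n + j)" for j
  have "t 0 = chn x n" "\<forall>j. t j \<in> A \<and> f (t (Suc j)) = t j" using chn[OF assms] by (auto simp: t_def)
  then show ?thesis unfolding Ainf_def using chn(2)[OF assms, of n] by (auto intro!: exI[of _ t])
qed

lemma core0I:
  assumes H: "H \<subseteq> A" "H \<noteq> {}" "f ` H \<subseteq> H" and \<beta>: "\<forall>y\<in>H. \<beta> y \<in> H \<and> f (\<beta> y) = y"
    and ch: "\<forall>q\<in>H. \<exists>a b. \<forall>x\<in>H. f x = q \<longrightarrow> x = a \<or> x = b"
    and iso: "S0 H f"
  shows "core0 A f H"
proof -
  have HA: "\<forall>x\<in>H. x \<in> Ainf H f" using back_Ainf[OF H(1) \<beta>] by blast
  have HK: "H \<subseteq> K" using HA Ainf_mono[OF H(1)] by blast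
  have "\<forall>x\<in>A. \<exists>t. (f ^^ t) x \<in> H" using reach_sub[OF H] by blast
  then have "retract A f H"
    using back_retract[OF fA H \<beta>] by blast
  then show ?thesis unfolding core0_def using ch iso HA HK by blast
qed

lemma card2: "card {a, b} \<le> 2"
  by (cases "a = b") auto

lemma card3: assumes "\<forall>x\<in>S. x = a \<or> x = b" "x1 \<in> S" "x2 \<in> S" "x3 \<in> S"
  shows "card {x1, x2, x3} \<le> 2"
proof -
  have "{x1, x2, x3} \<subseteq> {a, b}" using assms by blast
  then have "card {x1, x2, x3} \<le> card {a, b}" by (intro card_mono) auto
  then show ?thesis using card2[of a b] by linarith
qed

lemma card3_eq: assumes "x1 = x2 \<or> x1 = x3 \<or> x2 = x3" shows "card {x1, x2, x3} \<le> 2"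
proof -
  have "\<exists>a b. {x1, x2, x3} = {a, b}" using assms by blast
  then show ?thesis using card2 by metis
qed

end

context ca begin

lemma acyc_eq:
  assumes ac: "\<forall>z\<in>A. \<forall>n. (f ^^ Suc n) z \<noteq> z" and x: "x \<in> A" and e: "(f ^^ i) x = (f ^^ j) x"
  shows "i = j"
proof (rule ccontr)
  assume ne: "i \<noteq> j"
  show False
  proof (cases "i < j")
    case True
    from cyc_of_eq[OF e True] ac powin[OF x] show False by blast
  next
    case False
    then have "j < i" using ne by simp
    from cyc_of_eq[OF e[symmetric] this] ac powin[OF x] show False by blast
  qed
qed

lemma notK_acyc: "z \<in> A \<Longrightarrow> z \<notin> K \<Longrightarrow> (f ^^ Suc n) z \<noteq> z"
  using cyc_Ainf by blast

lemma Pset_step: "z \<in> Pset M f a \<Longrightarrow> z = a \<or> f z \<in> Pset M f a" if "f ` M \<subseteq> M"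
proof -
  assume "z \<in> Pset M f a"
  then obtain n where n: "(f ^^ n) z = a" "z \<in> M" unfolding Pset_def by blast
  show ?thesis
  proof (cases n)
    case 0 then show ?thesis using n by simp
  next
    case (Suc m)
    then have "(f ^^ m) (f z) = a" using n by (simp add: funpow_swap1)
    then show ?thesis using n that by (auto simp: Pset_def)
  qed
qed

lemma Pset_back: "z \<in> M \<Longrightarrow> f z \<in> Pset M f a \<Longrightarrow> z \<in> Pset M f a"
  unfolding Pset_def by (auto, metis funpow_Suc_right o_apply)

lemma Pset_root: "a \<in> M \<Longrightarrow> a \<in> Pset M f a"
  unfolding Pset_def by (auto intro: exI[of _ 0])

lemma Pset_mono: "M \<subseteq> N \<Longrightarrow> Pset M f a \<subseteq> Pset N f a"
  unfolding Pset_def by auto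

lemma TR:
  assumes K0: "core0 A f K0" and a: "a \<in> A" "a \<notin> K" "f a \<in> K0"
    and uv: "u \<in> Pset A f a" "v \<in> Pset A f a" "f u = f v"
  shows "\<exists>M h. retract A f M \<and> S1 M f \<and> u \<in> M \<and> v \<in> M \<and> K0 \<subseteq> M \<and> Ainf M f = K0 \<and>
      isret A f M h \<and> goodret A f M h"
proof -
  define P where "P = Pset A f a"
  have PA: "P \<subseteq> A" unfolding P_def Pset_def by auto
  have K0K: "K0 \<subseteq> K" using K0 unfolding core0_def by blast
  have K0A: "K0 \<subseteq> A" using K0K Ainf_sub by blast
  have PK: "z \<notin> K" if "z \<in> P" for z using Pset_notK[OF a(2)] that P_def by blast
  have PK0: "z \<notin> K0" if "z \<in> P" for z using PK that K0K by blast
  have aP: "a \<in> P" using Pset_root a(1) P_def by metis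
  have fP: "z = a \<or> f z \<in> P" if "z \<in> P" for z using Pset_step[OF fA] that P_def by blast
  have bP: "z \<in> P" if "z \<in> A" "f z \<in> P" for z using Pset_back that P_def by metis
  have rK0: "retract A f K0" using K0 unfolding core0_def by blast
  then obtain h0 where h0: "h0 ` A \<subseteq> K0" "\<forall>x\<in>A. h0 (f x) = f (h0 x)" "\<forall>x\<in>K0. h0 x = x"
    unfolding retract_def by blast
  have fK0: "f ` K0 \<subseteq> K0" using rK0 unfolding retract_def by blast
  define A1 where "A1 = K0 \<union> P"
  define h1 where "h1 x = (if x \<in> P then x else h0 x)" for x
  have A1A: "A1 \<subseteq> A" using K0A PA A1_def by blast
  have fA1: "f ` A1 \<subseteq> A1"
  proof
    fix y assume "y \<in> f ` A1"
    then obtain z where z: "z \<in> A1" "y = f z" by blast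
    show "y \<in> A1"
    proof (cases "z \<in> P")
      case True then show ?thesis using fP z a(3) A1_def by auto
    next
      case False then show ?thesis using z fK0 A1_def by auto
    qed
  qed
  have ret1: "retract A f A1"
    unfolding retract_def
  proof (intro conjI exI[of _ h1])
    show "A1 \<noteq> {}" using aP A1_def by blast
    show "A1 \<subseteq> A" by (rule A1A)
    show "f ` A1 \<subseteq> A1" by (rule fA1)
    show "h1 ` A \<subseteq> A1" using h0 A1_def h1_def by auto
    show "\<forall>x\<in>A. h1 (f x) = f (h1 x)"
    proof
      fix x assume x: "x \<in> A"
      show "h1 (f x) = f (h1 x)"
      proof (cases "x \<in> P")
        case True
        then consider "x = a" | "f x \<in> P" using fP by blast
        then show ?thesis
        proof cases
          case 1 then show ?thesis using h0(3) a(3) PK0 True h1_def by auto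
        next
          case 2 then show ?thesis using True h1_def by simp
        qed
      next
        case False
        then have "f x \<notin> P" using bP x by blast
        then show ?thesis using False h0(2) x h1_def by simp
      qed
    qed
    show "\<forall>x\<in>A1. h1 x = x" using h0(3) A1_def h1_def by auto
  qed
  have reach1: "\<forall>z\<in>A1. \<exists>n. (f ^^ n) z \<in> K0"
  proof
    fix z assume z: "z \<in> A1"
    show "\<exists>n. (f ^^ n) z \<in> K0"
    proof (cases "z \<in> K0")
      case True then show ?thesis by (metis funpow_0)
    next
      case False
      then have "z \<in> P" using z A1_def by blast
      then obtain n where "(f ^^ n) z = a" unfolding P_def Pset_def by blast
      then have "(f ^^ Suc n) z \<in> K0" using a(3) by simp
      then show ?thesis by blast
    qed
  qed
  have acyc1: "\<forall>z\<in>A1 - K0. \<forall>n. (f ^^ Suc n) z \<noteq> z"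
    using A1_def PK PA notK_acyc by blast
  have uv1: "u \<in> A1 - K0" "v \<in> A1 - K0" using uv PK0 A1_def P_def by auto
  obtain M h2 where M: "K0 \<subseteq> M" "M \<subseteq> A1" "f ` M \<subseteq> M" "u \<in> M" "v \<in> M" "h2 ` A1 \<subseteq> M"
      "\<forall>z\<in>A1. h2 (f z) = f (h2 z)" "\<forall>z\<in>M. h2 z = z"
      and prep: "\<forall>x\<in>M - K0. \<forall>y\<in>M - K0. f x = f y \<and> sim A1 f x y \<and> sim A1 f y x \<longrightarrow> x = y \<or> (x \<in> {u,v} \<and> y \<in> {u,v})"
    using prune[OF fA1 _ fK0 reach1 acyc1 uv1(1) uv1(2) uv(3)] A1_def by blast
  have ret2: "retract A1 f M" unfolding retract_def using M by blast
  have retM: "retract A f M" using retract_trans[OF ret1 ret2] .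
  have MA: "M \<subseteq> A" using M(2) A1A by blast
  have aM: "a \<in> M"
  proof -
    obtain n where "(f ^^ n) u = a" using uv(1) unfolding Pset_def by blast
    then show ?thesis using pow_closed[OF M(3) M(4)] by metis
  qed
  have MP: "z \<in> P" if "z \<in> M" "z \<notin> K0" for z using that M(2) A1_def by blast
  have AinfM: "Ainf M f = K0"
  proof
    show "Ainf M f \<subseteq> K0"
    proof
      fix x assume x: "x \<in> Ainf M f"
      then have "x \<in> M" using Ainf_sub by blast
      moreover have "x \<in> K" using x Ainf_mono[OF MA] by blast
      ultimately show "x \<in> K0" using MP PK by blast
    qed
    show "K0 \<subseteq> Ainf M f"
      using K0 Ainf_mono[OF M(1)] unfolding core0_def by blast
  qed
  have aK0: "a \<notin> K0" using a(2) K0K by blast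
  have Apr: "Aprime M f = {a}"
  proof
    show "Aprime M f \<subseteq> {a}"
    proof
      fix x assume "x \<in> Aprime M f"
      then have x: "x \<in> M" "x \<notin> K0" "f x \<in> K0" unfolding Aprime_def AinfM by auto
      then have "x \<in> P" using MP by blast
      then show "x \<in> {a}" using fP x PK0 by blast
    qed
    show "{a} \<subseteq> Aprime M f" unfolding Aprime_def AinfM using aM aK0 a(3) by auto
  qed
  have MminusP: "M - Pset M f a = K0"
  proof
    show "M - Pset M f a \<subseteq> K0"
    proof
      fix x assume x: "x \<in> M - Pset M f a"
      show "x \<in> K0"
      proof (rule ccontr)
        assume "x \<notin> K0"
        then have "x \<in> P" using MP x by blast
        then obtain n where "(f ^^ n) x = a" unfolding P_def Pset_def by blast
        then have "x \<in> Pset M f a" using x unfolding Pset_def by blast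
        with x show False by blast
      qed
    qed
    show "K0 \<subseteq> M - Pset M f a"
    proof
      fix x assume x: "x \<in> K0"
      have "x \<notin> P" using PK0 x by blast
      then have "x \<notin> Pset M f a" using Pset_mono[OF MA] P_def by blast
      then show "x \<in> M - Pset M f a" using x M(1) by blast
    qed
  qed
  have S0K0: "S0 K0 f" using K0 unfolding core0_def by blast
  have hret: "M \<subseteq> A1" "f ` M \<subseteq> M" "h2 ` A1 \<subseteq> M" "\<forall>z\<in>A1. h2 (f z) = f (h2 z)" "\<forall>z\<in>M. h2 z = z"
    using M by auto
  have star: "star_cond M f"
    unfolding star_cond_def
  proof (intro ballI impI)
    fix x1 x2 x3 assume xs: "x1 \<in> M" "x2 \<in> M" "x3 \<in> M"
    assume H: "f x1 = f x2 \<and> f x2 = f x3 \<and> partial_iso (Pset M f x1) (Pset M f x2) f \<and>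
      partial_iso (Pset M f x1) (Pset M f x3) f \<and> partial_iso (Pset M f x2) (Pset M f x3) f"
    have iso: "partial_iso (Pset M f x) (Pset M f y) f" if "x \<in> {x1,x2,x3}" "y \<in> {x1,x2,x3}" for x y
    proof -
      have "partial_iso (Pset M f x) (Pset M f x) f"
        unfolding partial_iso_def by (rule exI[of _ id]) auto
      then show ?thesis using that H partial_iso_sym by auto
    qed
    have fe: "f x = f y" if "x \<in> {x1,x2,x3}" "y \<in> {x1,x2,x3}" for x y using that H by auto
    have xsM: "x \<in> M" if "x \<in> {x1,x2,x3}" for x using that xs by auto
    have noaK: False if "x \<in> {x1,x2,x3}" "y \<in> {x1,x2,x3}" "x = a" "y \<in> K0" for x y
    proof -
      have "y \<in> Ainf M f" using that AinfM by simp
      then have "a \<in> Ainf M f" using iso_Ainf[OF M(3) iso[OF that(2,1)]] that aM by simp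
      then show False using AinfM aK0 by simp
    qed
    show "card {x1, x2, x3} \<le> 2"
    proof (cases "f x1 \<in> K0")
      case True
      have cls: "x \<in> K0 \<or> x = a" if "x \<in> {x1,x2,x3}" for x
      proof (cases "x \<in> K0")
        case False
        then have "x \<in> P" using MP xsM[OF that] by blast
        moreover have "f x \<in> K0" using fe[OF that, of x1] True by simp
        ultimately show ?thesis using fP PK0 by blast
      qed simp
      show ?thesis
      proof (cases "a \<in> {x1,x2,x3}")
        case True
        then have "\<forall>x\<in>{x1,x2,x3}. x = a" using cls noaK by blast
        then show ?thesis using card3_eq by auto
      next
        case False
        then have all: "\<forall>x\<in>{x1,x2,x3}. x \<in> K0" using cls by blast
        obtain \<alpha> \<beta> where ab: "\<forall>x\<in>K0. f x = f x1 \<longrightarrow> x = \<alpha> \<or> x = \<beta>"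
          using K0 True unfolding core0_def by blast
        have "\<forall>x\<in>{x \<in> K0. f x = f x1}. x = \<alpha> \<or> x = \<beta>" using ab by blast
        moreover have "x \<in> {x \<in> K0. f x = f x1}" if "x \<in> {x1,x2,x3}" for x using all that fe by blast
        ultimately show ?thesis using card3[of "{x \<in> K0. f x = f x1}" \<alpha> \<beta> x1 x2 x3] by blast
      qed
    next
      case False
      have notK0: "x \<notin> K0" if "x \<in> {x1,x2,x3}" for x
        using that False fe[OF that, of x1] fK0 by auto
      have inP: "x \<in> P" if "x \<in> {x1,x2,x3}" for x using notK0 that MP xsM by blast
      have simxy: "sim A1 f x y" if "x \<in> {x1,x2,x3}" "y \<in> {x1,x2,x3}" for x y
      proof (rule iso_sim[OF fA1 hret])
        show "x \<in> M" using xsM that by blast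
        show "\<forall>n. (f ^^ Suc n) x \<noteq> x" using notK_acyc PK inP that PA by blast
        show "y \<in> M" using xsM that by blast
        show "partial_iso (Pset M f x) (Pset M f y) f" using iso that by blast
      qed
      have pr: "x = y \<or> (x \<in> {u,v} \<and> y \<in> {u,v})" if "x \<in> {x1,x2,x3}" "y \<in> {x1,x2,x3}" for x y
      proof -
        have xm: "x \<in> M - K0" using notK0[OF that(1)] xsM[OF that(1)] by blast
        have ym: "y \<in> M - K0" using notK0[OF that(2)] xsM[OF that(2)] by blast
        have "f x = f y \<and> sim A1 f x y \<and> sim A1 f y x" using fe[OF that] simxy[OF that] simxy[OF that(2,1)] by blast
        then show ?thesis using prep xm ym by blast
      qed
      have "x1 = x2 \<or> x1 = x3 \<or> x2 = x3"
        using pr[of x1 x2] pr[of x1 x3] pr[of x2 x3] by auto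
      then show ?thesis by (rule card3_eq)
    qed
  qed
  have US: "U_star_c M f"
    unfolding U_star_c_def mono_alg_def using M(3,4) sub_connected[OF MA] star by blast
  have S1: "S1 M f" unfolding S1_def using US aM Apr MminusP S0K0 by blast
  define h where "h = h2 \<circ> h1"
  have hret: "isret A f M h"
    using retM unfolding isret_def h_def
  proof -
    have "\<forall>x\<in>A. h1 x \<in> A1" using ret1 h1_def h0 A1_def by auto
    then show "(h2 \<circ> h1) ` A \<subseteq> M \<and> (\<forall>x\<in>A. (h2 \<circ> h1) (f x) = f ((h2 \<circ> h1) x)) \<and> (\<forall>x\<in>M. (h2 \<circ> h1) x = x)"
    proof (intro conjI)
      assume h1A: "\<forall>x\<in>A. h1 x \<in> A1"
      show "(h2 \<circ> h1) ` A \<subseteq> M" using h1A M(6) by auto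
      have h1hom: "\<forall>x\<in>A. h1 (f x) = f (h1 x)" using ret1 unfolding retract_def
        by (metis (no_types, lifting) A1_def Un_iff fP bP fin h0(2) h0(3) h1_def PK0 a(3))
      show "\<forall>x\<in>A. (h2 \<circ> h1) (f x) = f ((h2 \<circ> h1) x)" using h1A h1hom M(7) by simp
      show "\<forall>x\<in>M. (h2 \<circ> h1) x = x" using M(2,8) h0(3) A1_def h1_def by auto
    qed
  qed
  have hgood: "goodret A f M h"
    unfolding goodret_def AinfM
  proof (intro ballI impI)
    fix x assume x: "x \<in> A" "x \<notin> M \<and> f x \<in> K0"
    have "x \<notin> P"
    proof
      assume "x \<in> P"
      then consider "x = a" | "f x \<in> P" using fP by blast
      then show False using x aM PK0 by cases auto
    qed
    then have "h1 x \<in> K0" using h0 x h1_def by auto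
    then show "h x \<in> K0" using M(1,8) h_def by auto
  qed
  show ?thesis using retM S1 M(4,5,1) AinfM hret hgood by blast
qed

end

context ca begin

lemma hom_pow:
  assumes "\<forall>x\<in>A. g (f x) = f (g x)" "x \<in> A"
  shows "g ((f ^^ n) x) = (f ^^ n) (g x)"
proof (induction n)
  case (Suc n)
  have "(f ^^ n) x \<in> A" using powin assms(2) by blast
  then show ?case using Suc assms(1) by simp
qed simp

lemma cyc_mult: "(f ^^ Suc q) c = c \<Longrightarrow> (f ^^ (Suc q * r)) c = c"
proof (induction r)
  case (Suc r)
  have "(f ^^ (Suc q * Suc r)) c = (f ^^ (Suc q * r)) ((f ^^ Suc q) c)"
    by (metis funpow_plus mult_Suc_right add.commute)
  then show ?case using Suc by simp
qed simp

lemma same_cycle: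
  assumes "c \<in> A" "c' \<in> A" "(f ^^ Suc p) c = c" "(f ^^ Suc q) c' = c'"
  shows "\<exists>i. c' = (f ^^ i) c"
proof -
  obtain m n where mn: "(f ^^ m) c = (f ^^ n) c'" using conn assms(1,2) by blast
  have "c' = (f ^^ (Suc q * n)) c'" using cyc_mult[OF assms(4)] by simp
  also have "\<dots> = (f ^^ (q * n)) ((f ^^ n) c')" by (simp add: funpow_plus add.commute)
  also have "\<dots> = (f ^^ (q * n)) ((f ^^ m) c)" using mn by simp
  also have "\<dots> = (f ^^ (q * n + m)) c" by (simp add: funpow_plus)
  finally show ?thesis by blast
qed

lemma assemble:
  fixes J :: "('a set \<times> nat) set"
  assumes J: "J \<noteq> {}" "\<forall>j\<in>J. retract A f (fst j) \<and> S_class (fst j) f"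
    and g: "\<forall>j\<in>J. \<forall>x\<in>A. g j x \<in> fst j \<and> g j (f x) = f (g j x)"
    and cov: "\<forall>y\<in>A. \<exists>j\<in>J. g j y = y"
    and sib: "\<forall>u\<in>A. \<forall>v\<in>A. f u = f v \<and> u \<noteq> v \<longrightarrow> (\<exists>j\<in>J. g j u \<noteq> g j v)"
  shows "\<exists>B. (\<forall>M\<in>B. retract A f M \<and> S_class M f) \<and> in_V B f A f \<and> (\<forall>M\<in>B. in_V {A} f M f)"
proof -
  define B where "B = fst ` J"
  have sub: "fst j \<subseteq> A" "f ` fst j \<subseteq> fst j" if "j \<in> J" for j
    using J(2) that unfolding retract_def by auto
  have ghom: "g j ((f ^^ n) x) = (f ^^ n) (g j x)" if "j \<in> J" "x \<in> A" for j x n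
    using hom_pow[of "g j" x n] g that by blast
  have inj: "\<forall>y\<in>A. \<forall>z\<in>A. (\<forall>j\<in>J. g j y = g j z) \<longrightarrow> y = z"
  proof (intro ballI impI)
    fix y z assume yz: "y \<in> A" "z \<in> A" and eq: "\<forall>j\<in>J. g j y = g j z"
    show "y = z"
    proof (rule ccontr)
      assume ne: "y \<noteq> z"
      show False
      proof (cases "\<exists>k. (f ^^ k) y = (f ^^ k) z")
        case True
        define k where "k = (LEAST k. (f ^^ k) y = (f ^^ k) z)"
        have k: "(f ^^ k) y = (f ^^ k) z" unfolding k_def using True by (meson LeastI_ex)
        have k0: "k \<noteq> 0" using k ne by (cases k) auto
        then obtain k' where k': "k = Suc k'" by (cases k) auto
        have ne': "(f ^^ k') y \<noteq> (f ^^ k') z"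
        proof
          assume "(f ^^ k') y = (f ^^ k') z"
          then have "k \<le> k'" unfolding k_def by (meson Least_le)
          then show False using k' by simp
        qed
        have fe: "f ((f ^^ k') y) = f ((f ^^ k') z)" using k k' by simp
        obtain j where j: "j \<in> J" "g j ((f ^^ k') y) \<noteq> g j ((f ^^ k') z)"
          using sib powin yz fe ne' by meson
        then show False using ghom[OF j(1) yz(1)] ghom[OF j(1) yz(2)] eq by simp
      next
        case False
        obtain m n where mn: "(f ^^ m) y = (f ^^ n) z" using conn yz by blast
        show False
        proof (cases "\<exists>c\<in>A. \<exists>p. (f ^^ Suc p) c = c")
          case True
          define Cy where "Cy = {x \<in> A. \<exists>p. (f ^^ Suc p) x = x}"
          have CyA: "Cy \<subseteq> A" "Cy \<noteq> {}" using True Cy_def by auto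
          have fCy: "f ` Cy \<subseteq> Cy"
          proof
            fix w assume "w \<in> f ` Cy"
            then obtain x p where x: "w = f x" "x \<in> A" "(f ^^ Suc p) x = x" unfolding Cy_def by blast
            have "(f ^^ Suc p) (f x) = f x" using x(3) by (metis funpow_swap1)
            then show "w \<in> Cy" using x fin unfolding Cy_def by blast
          qed
          obtain t1 where t1: "(f ^^ t1) y \<in> Cy" using reach_sub[OF CyA fCy yz(1)] by blast
          obtain t2 where t2: "(f ^^ t2) z \<in> Cy" using reach_sub[OF CyA fCy yz(2)] by blast
          define N where "N = t2 + t1"
          have yN: "(f ^^ N) y \<in> Cy" using pow_closed[OF fCy t1, of t2] unfolding N_def by (simp add: funpow_plus)
          have zN: "(f ^^ N) z \<in> Cy" using pow_closed[OF fCy t2, of t1] unfolding N_def by (simp add: funpow_plus add.commute)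
          have neN: "(f ^^ N) y \<noteq> (f ^^ N) z" using False by blast
          obtain j where j: "j \<in> J" "g j ((f ^^ N) y) = (f ^^ N) y" using cov yN CyA by blast
          obtain p q where pq: "(f ^^ Suc p) ((f ^^ N) y) = (f ^^ N) y" "(f ^^ Suc q) ((f ^^ N) z) = (f ^^ N) z"
            using yN zN Cy_def by blast
          obtain i where i: "(f ^^ N) z = (f ^^ i) ((f ^^ N) y)"
            using same_cycle[OF powin[OF yz(1)] powin[OF yz(2)] pq] by blast
          have "g j ((f ^^ N) z) = (f ^^ N) z" using i ghom[OF j(1) powin[OF yz(1)], of i] j(2) by simp
          then show False using ghom[OF j(1) yz(1)] ghom[OF j(1) yz(2)] eq j neN by simp
        next
          case nc: False
          have mn_ne: "m \<noteq> n" using False mn by blast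
          obtain j where j: "j \<in> J" using J(1) by blast
          have w: "g j y \<in> A" using g j yz sub by blast
          have "(f ^^ m) (g j y) = (f ^^ n) (g j y)"
            using ghom[OF j yz(1)] ghom[OF j yz(2)] eq j mn by metis
          then have "m = n" using acyc_eq[OF _ w] nc by blast
          then show False using mn_ne by simp
        qed
      qed
    qed
  qed
  have V: "in_V B f A f"
    unfolding B_def
    apply (rule in_V_intro[where g = g and k = "\<lambda>j x. x"])
    using J(1) sub fA ne g cov inj by auto
  show ?thesis using J(2) V retract_in_V_A[OF fA] unfolding B_def by blast
qed

lemma MT:
  assumes K: "K = {}" and uv: "u \<in> A" "v \<in> A" "f u = f v"
  shows "\<exists>M. retract A f M \<and> S_class M f \<and> u \<in> M \<and> v \<in> M"
proof -
  have ac: "\<forall>z\<in>A. \<forall>n. (f ^^ Suc n) z \<noteq> z" using cyc_Ainf K by blast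
  define D where "D = range (\<lambda>k. (f ^^ Suc k) u)"
  have DA: "D \<subseteq> A" using powin[OF uv(1)] D_def by blast
  have fD: "f ` D \<subseteq> D"
  proof
    fix w assume "w \<in> f ` D"
    then obtain k where "w = f ((f ^^ Suc k) u)" unfolding D_def by blast
    then have "w = (f ^^ Suc (Suc k)) u" by simp
    then show "w \<in> D" unfolding D_def by blast
  qed
  have reach: "\<forall>z\<in>A. \<exists>n. (f ^^ n) z \<in> D"
  proof
    fix z assume z: "z \<in> A"
    obtain m n where "(f ^^ m) z = (f ^^ n) u" using conn z uv by blast
    then have "(f ^^ Suc m) z = (f ^^ Suc n) u" by simp
    then show "\<exists>n. (f ^^ n) z \<in> D" unfolding D_def by (metis rangeI)
  qed
  have acD: "\<forall>z\<in>A - D. \<forall>n. (f ^^ Suc n) z \<noteq> z" using ac by blast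
  have uD: "u \<notin> D"
  proof
    assume "u \<in> D"
    then obtain k where "u = (f ^^ Suc k) u" unfolding D_def by blast
    then show False using ac uv by metis
  qed
  have vD: "v \<notin> D"
  proof
    assume "v \<in> D"
    then obtain k where "v = (f ^^ Suc k) u" unfolding D_def by blast
    also have "\<dots> = (f ^^ k) (f v)" using uv(3) by (simp add: funpow_swap1)
    also have "\<dots> = (f ^^ Suc k) v" by (simp add: funpow_swap1)
    finally show False using ac uv by metis
  qed
  have uvD: "u \<in> A - D" "v \<in> A - D" using uv uD vD by auto
  obtain M h where M: "D \<subseteq> M" "M \<subseteq> A" "f ` M \<subseteq> M" "u \<in> M" "v \<in> M" "h ` A \<subseteq> M"
      "\<forall>z\<in>A. h (f z) = f (h z)" "\<forall>z\<in>M. h z = z"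
      and prep: "\<forall>x\<in>M - D. \<forall>y\<in>M - D. f x = f y \<and> sim A f x y \<and> sim A f y x \<longrightarrow> x = y \<or> (x \<in> {u,v} \<and> y \<in> {u,v})"
    using prune[OF fA DA fD reach acD uvD(1) uvD(2) uv(3)] by blast
  have retM: "retract A f M" unfolding retract_def using M by blast
  have Dsib: "x = y" if xyD: "x \<in> D" "y \<in> D" "f x = f y" for x y
  proof -
    obtain i j where ij: "x = (f ^^ Suc i) u" "y = (f ^^ Suc j) u" using xyD D_def by blast
    have "(f ^^ Suc (Suc i)) u = (f ^^ Suc (Suc j)) u" using xyD(3) ij by simp
    then have "Suc (Suc i) = Suc (Suc j)" using acyc_eq[OF ac uv(1)] by blast
    then show ?thesis using ij by simp
  qed
  have Dnot: "f x \<noteq> f u" if xD: "x \<in> D" for x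
  proof
    assume a: "f x = f u"
    obtain i where i: "x = (f ^^ Suc i) u" using xD D_def by blast
    have "(f ^^ Suc (Suc i)) u = (f ^^ 1) u" using a i by simp
    then show False using acyc_eq[OF ac uv(1)] by fastforce
  qed
  have star: "star_cond M f"
    unfolding star_cond_def
  proof (intro ballI impI)
    fix x1 x2 x3 assume xs: "x1 \<in> M" "x2 \<in> M" "x3 \<in> M"
    assume H: "f x1 = f x2 \<and> f x2 = f x3 \<and> partial_iso (Pset M f x1) (Pset M f x2) f \<and>
      partial_iso (Pset M f x1) (Pset M f x3) f \<and> partial_iso (Pset M f x2) (Pset M f x3) f"
    have iso: "partial_iso (Pset M f x) (Pset M f y) f" if "x \<in> {x1,x2,x3}" "y \<in> {x1,x2,x3}" for x y
    proof -
      have "partial_iso (Pset M f x) (Pset M f x) f"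
        unfolding partial_iso_def by (rule exI[of _ id]) auto
      then show ?thesis using that H partial_iso_sym by auto
    qed
    have fe: "f x = f y" if "x \<in> {x1,x2,x3}" "y \<in> {x1,x2,x3}" for x y using that H by auto
    have xsM: "x \<in> M" if "x \<in> {x1,x2,x3}" for x using that xs by auto
    have simxy: "sim A f x y" if "x \<in> {x1,x2,x3}" "y \<in> {x1,x2,x3}" for x y
    proof (rule iso_sim[OF fA M(2,3,6,7,8)])
      show "x \<in> M" using xsM that by blast
      show "\<forall>n. (f ^^ Suc n) x \<noteq> x" using ac xsM that M(2) by blast
      show "y \<in> M" using xsM that by blast
      show "partial_iso (Pset M f x) (Pset M f y) f" using iso that by blast
    qed
    have pr: "x = y \<or> (x \<in> {u,v} \<and> y \<in> {u,v})" if "x \<in> {x1,x2,x3}" "y \<in> {x1,x2,x3}" "x \<notin> D" "y \<notin> D" for x y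
    proof -
      have xm: "x \<in> M - D" using that xsM by blast
      have ym: "y \<in> M - D" using that xsM by blast
      have "f x = f y \<and> sim A f x y \<and> sim A f y x" using fe[OF that(1,2)] simxy[OF that(1,2)] simxy[OF that(2,1)] by blast
      then show ?thesis using prep xm ym by blast
    qed
    have dd: "x = y" if "x \<in> {x1,x2,x3}" "y \<in> {x1,x2,x3}" "x \<in> D" "y \<in> D" for x y
      using Dsib that fe by blast
    have dn: "\<not> (x \<in> D \<and> y \<in> {u,v})" if "x \<in> {x1,x2,x3}" "y \<in> {x1,x2,x3}" for x y
    proof
      assume a: "x \<in> D \<and> y \<in> {u,v}"
      then have "f y = f u" using uv(3) by auto
      then show False using Dnot a fe[OF that] by metis
    qed
    have "x1 = x2 \<or> x1 = x3 \<or> x2 = x3"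
    proof (rule ccontr)
      assume nd: "\<not> (x1 = x2 \<or> x1 = x3 \<or> x2 = x3)"
      have m1: "x1 \<in> {x1,x2,x3}" "x2 \<in> {x1,x2,x3}" "x3 \<in> {x1,x2,x3}" by auto
      consider "x1 \<in> D" | "x2 \<in> D" | "x3 \<in> D" | "x1 \<notin> D" "x2 \<notin> D" "x3 \<notin> D" by blast
      then show False
      proof cases
        case 1
        then have "x2 \<notin> D" "x3 \<notin> D" using dd[OF m1(1) m1(2)] dd[OF m1(1) m1(3)] nd by auto
        then have "x2 \<in> {u,v}" using pr[OF m1(2) m1(3)] nd by auto
        then show False using dn[OF m1(1) m1(2)] 1 by blast
      next
        case 2
        then have "x1 \<notin> D" "x3 \<notin> D" using dd[OF m1(2) m1(1)] dd[OF m1(2) m1(3)] nd by auto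
        then have "x1 \<in> {u,v}" using pr[OF m1(1) m1(3)] nd by auto
        then show False using dn[OF m1(2) m1(1)] 2 by blast
      next
        case 3
        then have "x1 \<notin> D" "x2 \<notin> D" using dd[OF m1(3) m1(1)] dd[OF m1(3) m1(2)] nd by auto
        then have "x1 \<in> {u,v}" using pr[OF m1(1) m1(2)] nd by auto
        then show False using dn[OF m1(3) m1(1)] 3 by blast
      next
        case 4
        then have "x1 \<in> {u,v}" "x2 \<in> {u,v}" "x3 \<in> {u,v}"
          using pr[OF m1(1) m1(2)] pr[OF m1(1) m1(3)] nd 4 by auto
        then show False using nd by blast
      qed
    qed
    then show "card {x1, x2, x3} \<le> 2" by (rule card3_eq)
  qed
  have US: "U_star_c M f"
    unfolding U_star_c_def mono_alg_def using M(3,4) sub_connected[OF M(2)] star by blast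
  have "Ainf M f = {}" using Ainf_mono[OF M(2)] K by blast
  then have "S2 M f" unfolding S2_def using US by blast
  then show ?thesis using retM M(4,5) unfolding S_class_def by blast
qed

lemma caseT:
  assumes K: "K = {}"
  shows "\<exists>B. (\<forall>M\<in>B. retract A f M \<and> S_class M f) \<and> in_V B f A f \<and> (\<forall>M\<in>B. in_V {A} f M f)"
proof -
  define Mf where "Mf u v = (SOME M. retract A f M \<and> S_class M f \<and> u \<in> M \<and> v \<in> M)" for u v
  have Mf: "retract A f (Mf u v) \<and> S_class (Mf u v) f \<and> u \<in> Mf u v \<and> v \<in> Mf u v"
    if "u \<in> A" "v \<in> A" "f u = f v" for u v
    unfolding Mf_def using MT[OF K that] by (rule someI_ex)
  define J where "J = {(Mf u v, 0::nat) | u v. u \<in> A \<and> v \<in> A \<and> f u = f v}"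
  define g where "g j = retr A f (fst j)" for j :: "'a set \<times> nat"
  have Jret: "\<forall>j\<in>J. retract A f (fst j) \<and> S_class (fst j) f" using Mf J_def by auto
  have gi: "isret A f (fst j) (g j)" if "j \<in> J" for j unfolding g_def using Jret that retr_isret by blast
  show ?thesis
  proof (rule assemble[of J g])
    show "J \<noteq> {}" using ne J_def by blast
    show "\<forall>j\<in>J. retract A f (fst j) \<and> S_class (fst j) f" by (rule Jret)
    show "\<forall>j\<in>J. \<forall>x\<in>A. g j x \<in> fst j \<and> g j (f x) = f (g j x)" using gi unfolding isret_def by blast
    show "\<forall>y\<in>A. \<exists>j\<in>J. g j y = y"
    proof
      fix y assume y: "y \<in> A"
      have j: "(Mf y y, 0) \<in> J" using y J_def by blast
      then have "g (Mf y y, 0) y = y" using gi[OF j] Mf[OF y y] unfolding isret_def by auto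
      then show "\<exists>j\<in>J. g j y = y" using j by blast
    qed
    show "\<forall>u\<in>A. \<forall>v\<in>A. f u = f v \<and> u \<noteq> v \<longrightarrow> (\<exists>j\<in>J. g j u \<noteq> g j v)"
    proof (intro ballI impI)
      fix u v assume uv: "u \<in> A" "v \<in> A" "f u = f v \<and> u \<noteq> v"
      have j: "(Mf u v, 0) \<in> J" using uv J_def by blast
      then have "g (Mf u v, 0) u = u" "g (Mf u v, 0) v = v"
        using gi[OF j] Mf[OF uv(1,2)] uv(3) unfolding isret_def by auto
      then show "\<exists>j\<in>J. g j u \<noteq> g j v" using j uv(3) by metis
    qed
  qed
qed

end

context ca begin

lemma K_sub: "K \<subseteq> A" using Ainf_sub by blast

lemma fK: "f ` K \<subseteq> K" using Ainf_f[OF _ fA] by blast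

lemma root:
  assumes Kne: "K \<noteq> {}" and y: "y \<in> A" "y \<notin> K"
  shows "\<exists>a. a \<in> A \<and> a \<notin> K \<and> f a \<in> K \<and> y \<in> Pset A f a"
proof -
  obtain t where t: "(f ^^ t) y \<in> K" using reach_sub[OF K_sub Kne fK y(1)] by blast
  define n where "n = (LEAST t. (f ^^ t) y \<in> K)"
  have n: "(f ^^ n) y \<in> K" unfolding n_def using t by (meson LeastI)
  have n0: "n \<noteq> 0" using n y(2) by (cases n) auto
  then obtain m where m: "n = Suc m" by (cases n) auto
  have "(f ^^ m) y \<notin> K"
  proof
    assume "(f ^^ m) y \<in> K"
    then have "n \<le> m" unfolding n_def by (meson Least_le)
    then show False using m by simp
  qed
  moreover have "f ((f ^^ m) y) \<in> K" using n m by simp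
  moreover have "y \<in> Pset A f ((f ^^ m) y)" using y unfolding Pset_def by blast
  ultimately show ?thesis using powin[OF y(1)] by blast
qed

definition TRM :: "'a set \<Rightarrow> 'a \<Rightarrow> 'a \<Rightarrow> 'a \<Rightarrow> 'a set" where
  "TRM K0 a u v = (SOME M. \<exists>h. retract A f M \<and> S1 M f \<and> u \<in> M \<and> v \<in> M \<and> K0 \<subseteq> M \<and> Ainf M f = K0 \<and>
      isret A f M h \<and> goodret A f M h)"

lemma TRM:
  assumes "core0 A f K0" "a \<in> A" "a \<notin> K" "f a \<in> K0" "u \<in> Pset A f a" "v \<in> Pset A f a" "f u = f v"
  shows "\<exists>h. retract A f (TRM K0 a u v) \<and> S1 (TRM K0 a u v) f \<and> u \<in> TRM K0 a u v \<and> v \<in> TRM K0 a u v \<and>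
     K0 \<subseteq> TRM K0 a u v \<and> Ainf (TRM K0 a u v) f = K0 \<and> isret A f (TRM K0 a u v) h \<and> goodret A f (TRM K0 a u v) h"
  unfolding TRM_def using TR[OF assms] by (rule someI_ex)

lemma core0_props: assumes "core0 A f K0" shows "K0 \<subseteq> K" "retract A f K0" "S0 K0 f" "f ` K0 \<subseteq> K0" "K0 \<subseteq> A"
  using assms K_sub unfolding core0_def retract_def by blast+

lemma core_assemble:
  fixes J' :: "('a set \<times> nat) set" and KC :: "'a set set"
  assumes Kne: "K \<noteq> {}" and KC: "\<forall>K0\<in>KC. core0 A f K0" and cover: "\<forall>w\<in>K. \<exists>K0\<in>KC. w \<in> K0"
    and J'1: "\<forall>j\<in>J'. retract A f (fst j) \<and> S_class (fst j) f"
    and J'2: "\<forall>j\<in>J'. snd j \<noteq> 0 \<longrightarrow> (\<forall>x\<in>A. g' j x \<in> fst j \<and> g' j (f x) = f (g' j x))"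
    and sep: "\<forall>u\<in>K. \<forall>v\<in>K. f u = f v \<and> u \<noteq> v \<longrightarrow> (\<exists>j\<in>J'. (if snd j = 0 then retr A f (fst j) else g' j) u \<noteq>
        (if snd j = 0 then retr A f (fst j) else g' j) v)"
  shows "\<exists>B. (\<forall>M\<in>B. retract A f M \<and> S_class M f) \<and> in_V B f A f \<and> (\<forall>M\<in>B. in_V {A} f M f)"
proof -
  define G where "G j = (if snd j = 0 then retr A f (fst j) else g' j)" for j :: "'a set \<times> nat"
  define JT where "JT = {(TRM K0 a u v, 0::nat) | K0 a u v. K0 \<in> KC \<and> a \<in> A \<and> a \<notin> K \<and> f a \<in> K0 \<and>
      u \<in> Pset A f a \<and> v \<in> Pset A f a \<and> f u = f v}"
  define JK where "JK = {(K0, 0::nat) | K0. K0 \<in> KC}"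
  define J where "J = J' \<union> JK \<union> JT"
  have K0p: "retract A f K0 \<and> S_class K0 f" if "K0 \<in> KC" for K0
    using core0_props[of K0] KC that unfolding S_class_def by blast
  have Jret: "\<forall>j\<in>J. retract A f (fst j) \<and> S_class (fst j) f"
  proof
    fix j assume "j \<in> J"
    then consider "j \<in> J'" | "j \<in> JK" | "j \<in> JT" unfolding J_def by blast
    then show "retract A f (fst j) \<and> S_class (fst j) f"
    proof cases
      case 1 then show ?thesis using J'1 by blast
    next
      case 2 then show ?thesis using K0p unfolding JK_def by auto
    next
      case 3
      then obtain K0 a u v where e: "j = (TRM K0 a u v, 0)" "K0 \<in> KC" "a \<in> A" "a \<notin> K" "f a \<in> K0"
        "u \<in> Pset A f a" "v \<in> Pset A f a" "f u = f v" unfolding JT_def by blast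
      have K0c: "core0 A f K0" using KC e(2) by blast
      show ?thesis using TRM[OF K0c e(3,4,5,6,7,8)] e(1) unfolding S_class_def by auto
    qed
  qed
  have Gret: "isret A f (fst j) (G j)" if "j \<in> J" "snd j = 0" for j
    using retr_isret Jret that unfolding G_def by auto
  have Ghom: "\<forall>j\<in>J. \<forall>x\<in>A. G j x \<in> fst j \<and> G j (f x) = f (G j x)"
  proof (intro ballI)
    fix j x assume j: "j \<in> J" and x: "x \<in> A"
    show "G j x \<in> fst j \<and> G j (f x) = f (G j x)"
    proof (cases "snd j = 0")
      case True then show ?thesis using Gret[OF j True] x unfolding isret_def by blast
    next
      case False
      then have "j \<in> J'" using j unfolding J_def JK_def JT_def by auto
      then show ?thesis using J'2 False x unfolding G_def by auto
    qed
  qed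
  have TRin: "(TRM K0 a u v, 0) \<in> J" if "K0 \<in> KC" "a \<in> A" "a \<notin> K" "f a \<in> K0"
      "u \<in> Pset A f a" "v \<in> Pset A f a" "f u = f v" for K0 a u v
    using that unfolding J_def JT_def by blast
  have fix0: "G j y = y" if "j \<in> J" "snd j = 0" "y \<in> fst j" for j y
    using Gret[OF that(1,2)] that(3) unfolding isret_def by blast
  have PA: "Pset A f a \<subseteq> A" for a unfolding Pset_def by blast
  have cov: "\<forall>y\<in>A. \<exists>j\<in>J. G j y = y"
  proof
    fix y assume y: "y \<in> A"
    show "\<exists>j\<in>J. G j y = y"
    proof (cases "y \<in> K")
      case True
      then obtain K0 where "K0 \<in> KC" "y \<in> K0" using cover by blast
      then have "(K0, 0) \<in> J" unfolding J_def JK_def by blast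
      then show ?thesis using fix0 \<open>y \<in> K0\<close> by force
    next
      case False
      obtain a where a: "a \<in> A" "a \<notin> K" "f a \<in> K" "y \<in> Pset A f a" using root[OF Kne y False] by blast
      obtain K0 where K0: "K0 \<in> KC" "f a \<in> K0" using cover a(3) by blast
      have j: "(TRM K0 a y y, 0) \<in> J" using TRin[OF K0(1) a(1,2) K0(2) a(4) a(4)] by simp
      have K0c: "core0 A f K0" using KC K0(1) by blast
      have "y \<in> TRM K0 a y y" using TRM[OF K0c a(1,2) K0(2) a(4) a(4)] by blast
      then show ?thesis using fix0[OF j] j by force
    qed
  qed
  have sib: "\<forall>u\<in>A. \<forall>v\<in>A. f u = f v \<and> u \<noteq> v \<longrightarrow> (\<exists>j\<in>J. G j u \<noteq> G j v)"
  proof (intro ballI impI)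
    fix u v assume uA: "u \<in> A" and vA: "v \<in> A" and uv: "f u = f v \<and> u \<noteq> v"
    have mixed: "\<exists>j\<in>J. G j u' \<noteq> G j v'" if mx: "u' \<in> K" "v' \<in> A" "v' \<notin> K" "f u' = f v'" "u' \<noteq> v'" for u' v'
    proof -
      obtain K0 where K0: "K0 \<in> KC" "u' \<in> K0" using cover mx(1) by blast
      have K0c: "core0 A f K0" using KC K0(1) by blast
      have fK0: "f ` K0 \<subseteq> K0" using core0_props[OF K0c] by blast
      have fv: "f v' \<in> K0" using mx(4) K0(2) fK0 by auto
      have vP: "v' \<in> Pset A f v'" using Pset_root mx(2) by metis
      have j: "(TRM K0 v' v' v', 0) \<in> J" using TRin[OF K0(1) mx(2,3) fv vP vP] by simp
      obtain h where T: "v' \<in> TRM K0 v' v' v'" "K0 \<subseteq> TRM K0 v' v' v'"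
        using TRM[OF K0c mx(2,3) fv vP vP] by blast
      have "G (TRM K0 v' v' v', 0) u' = u'" "G (TRM K0 v' v' v', 0) v' = v'"
        using fix0[OF j] T K0(2) by auto
      then show ?thesis using j mx(5) by metis
    qed
    consider "u \<in> K" "v \<in> K" | "u \<in> K" "v \<notin> K" | "u \<notin> K" "v \<in> K" | "u \<notin> K" "v \<notin> K" by blast
    then show "\<exists>j\<in>J. G j u \<noteq> G j v"
    proof cases
      case 1
      then obtain j where "j \<in> J'" "G j u \<noteq> G j v" using sep uv unfolding G_def by blast
      then show ?thesis unfolding J_def by blast
    next
      case 2 then show ?thesis using mixed[of u v] vA uv by blast
    next
      case 3 then show ?thesis using mixed[of v u] uA uv by (metis)
    next
      case 4
      show ?thesis
      proof (cases "f u \<in> K")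
        case True
        obtain K0 where K0: "K0 \<in> KC" "f u \<in> K0" using cover True by blast
        have uP: "u \<in> Pset A f u" using Pset_root uA by metis
        have j: "(TRM K0 u u u, 0) \<in> J" using TRin[OF K0(1) uA 4(1) K0(2) uP uP] by simp
        define M where "M = TRM K0 u u u"
        have K0c: "core0 A f K0" using KC K0(1) by blast
        obtain h where T: "retract A f M" "S1 M f" "u \<in> M" "K0 \<subseteq> M" "Ainf M f = K0" "isret A f M h" "goodret A f M h"
          using TRM[OF K0c uA 4(1) K0(2) uP uP] unfolding M_def by blast
        have K0K: "K0 \<subseteq> K" using core0_props[OF K0c] by blast
        obtain a where a: "Aprime M f = {a}" using T(2) unfolding S1_def by blast
        have "u \<in> Aprime M f" unfolding Aprime_def using T(3,5) 4 K0 K0K by auto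
        then have ua: "u = a" using a by blast
        have vM: "v \<notin> M"
        proof
          assume "v \<in> M"
          then have "v \<in> Aprime M f" unfolding Aprime_def using T(5) 4 K0 K0K uv by auto
          then show False using a ua uv by auto
        qed
        have gr: "goodret A f M (retr A f M)" using retr_good[OF T(6,7)] .
        have "retr A f M v \<in> K0" using gr vM uv K0(2) T(5) vA unfolding goodret_def by auto
        moreover have "retr A f M u = u" using fix0[OF j] T(3) unfolding M_def G_def by simp
        ultimately have "G (M, 0) u \<noteq> G (M, 0) v" using 4 K0K unfolding G_def by auto
        then show ?thesis using j unfolding M_def by blast
      next
        case False
        obtain a where a: "a \<in> A" "a \<notin> K" "f a \<in> K" "f u \<in> Pset A f a" using root[OF Kne fin[OF uA] False] by blast
        obtain K0 where K0: "K0 \<in> KC" "f a \<in> K0" using cover a(3) by blast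
        have uP: "u \<in> Pset A f a" using Pset_back uA a(4) by metis
        have vP: "v \<in> Pset A f a" using Pset_back vA a(4) uv by metis
        have j: "(TRM K0 a u v, 0) \<in> J" using TRin[OF K0(1) a(1,2) K0(2) uP vP] uv by simp
        have K0c: "core0 A f K0" using KC K0(1) by blast
        have "u \<in> TRM K0 a u v" "v \<in> TRM K0 a u v" using TRM[OF K0c a(1,2) K0(2) uP vP] uv by blast+
        then have "G (TRM K0 a u v, 0) u = u" "G (TRM K0 a u v, 0) v = v" using fix0[OF j] by auto
        then show ?thesis using j uv by metis
      qed
    qed
  qed
  have Jne: "J \<noteq> {}"
  proof -
    obtain w where "w \<in> K" using Kne by blast
    then obtain K0 where "K0 \<in> KC" using cover by blast
    then show ?thesis unfolding J_def JK_def by blast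
  qed
  show ?thesis using assemble[OF Jne Jret Ghom cov sib] .
qed

end

lemma alg_iso_inv:
  assumes bij: "bij_betw \<psi> B H" and hom: "\<forall>x\<in>B. \<psi> (g x) = f (\<psi> x)" and gB: "g ` B \<subseteq> B"
  shows "alg_iso H f B g"
proof -
  define h where "h = inv_into B \<psi>"
  have hb: "bij_betw h H B" using bij h_def by (simp add: bij_betw_inv_into)
  have "h (f y) = g (h y)" if y: "y \<in> H" for y
  proof -
    have x: "h y \<in> B" "\<psi> (h y) = y" using y bij h_def by (auto simp: bij_betw_def inv_into_into f_inv_into_f)
    have "f y = \<psi> (g (h y))" using hom x by metis
    moreover have "g (h y) \<in> B" using gB x by blast
    ultimately show ?thesis using bij h_def by (simp add: bij_betw_def)
  qed
  then show ?thesis unfolding alg_iso_def using hb by blast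
qed

context ca begin

definition ln :: "'a \<Rightarrow> int \<Rightarrow> 'a" where
  "ln w k = (if 0 \<le> k then (f ^^ nat k) w else chn w (nat (- k)))"

lemma ln_A: "w \<in> K \<Longrightarrow> ln w k \<in> A"
  unfolding ln_def using powin chn(2) K_sub by auto

lemma ln_0: "ln w 0 = w" by (simp add: ln_def)

lemma ln_f: assumes w: "w \<in> K" shows "f (ln w k) = ln w (k + 1)"
proof (cases "0 \<le> k")
  case True
  then have "nat (k + 1) = Suc (nat k)" by simp
  then show ?thesis using True by (simp add: ln_def)
next
  case False
  show ?thesis
  proof (cases "k = -1")
    case True then show ?thesis using chn[OF w] by (simp add: ln_def)
  next
    case False2: False
    then have "nat (- k) = Suc (nat (- (k + 1)))" "\<not> 0 \<le> k + 1" using False by auto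
    then show ?thesis using False chn(3)[OF w] by (simp add: ln_def)
  qed
qed

lemma ln_pow: assumes w: "w \<in> K" shows "(f ^^ m) (ln w k) = ln w (k + int m)"
proof (induction m)
  case (Suc m)
  then show ?case using ln_f[OF w] by (simp add: algebra_simps)
qed simp

lemma ln_inj:
  assumes ac: "\<forall>z\<in>A. \<forall>n. (f ^^ Suc n) z \<noteq> z" and w: "w \<in> K"
  shows "inj (ln w)"
proof (rule injI)
  fix i j assume e: "ln w i = ln w j"
  show "i = j"
  proof (rule ccontr)
    assume "i \<noteq> j"
    then consider "i < j" | "j < i" by linarith
    then show False
    proof cases
      case 1
      then obtain m where m: "j = i + int (Suc m)" by (metis add.commute less_imp_Suc_add of_nat_Suc zless_iff_Suc_zadd)
      have "(f ^^ Suc m) (ln w i) = ln w i" using ln_pow[OF w, of "Suc m" i] m e by simp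
      then show False using ac ln_A[OF w] by blast
    next
      case 2
      then obtain m where m: "i = j + int (Suc m)" by (metis add.commute less_imp_Suc_add of_nat_Suc zless_iff_Suc_zadd)
      have "(f ^^ Suc m) (ln w j) = ln w j" using ln_pow[OF w, of "Suc m" j] m e by simp
      then show False using ac ln_A[OF w] by blast
    qed
  qed
qed

lemma chn_inj:
  assumes ac: "\<forall>z\<in>A. \<forall>n. (f ^^ Suc n) z \<noteq> z" and w: "w \<in> K"
  shows "inj (chn w)"
proof (rule injI)
  fix i j assume e: "chn w i = chn w j"
  show "i = j"
  proof (rule ccontr)
    assume "i \<noteq> j"
    then consider "i < j" | "j < i" by linarith
    then show False
    proof cases
      case 1
      obtain m0 where "j = Suc (i + m0)" using less_imp_Suc_add[OF 1] by blast
      then obtain m where m: "j = Suc m + i" by (intro that[of m0]) simp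
      have "(f ^^ Suc m) (chn w j) = chn w i" using chn_pow[OF w, of "Suc m" i] m by simp
      then have "(f ^^ Suc m) (chn w j) = chn w j" using e by simp
      then show False using ac chn(2)[OF w, of j] by blast
    next
      case 2
      obtain m0 where "i = Suc (j + m0)" using less_imp_Suc_add[OF 2] by blast
      then obtain m where m: "i = Suc m + j" by (intro that[of m0]) simp
      have "(f ^^ Suc m) (chn w i) = chn w j" using chn_pow[OF w, of "Suc m" j] m by simp
      then have "(f ^^ Suc m) (chn w i) = chn w i" using e by simp
      then show False using ac chn(2)[OF w, of i] by blast
    qed
  qed
qed

lemma Line_core0:
  assumes ac: "\<forall>z\<in>A. \<forall>n. (f ^^ Suc n) z \<noteq> z" and w: "w \<in> K"
  shows "core0 A f (range (ln w))"
proof -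
  have inj: "inj (ln w)" using ln_inj[OF ac w] .
  have iv: "inv (ln w) (ln w k) = k" for k using inj by simp
  define \<beta> where "\<beta> y = ln w (inv (ln w) y - 1)" for y
  show ?thesis
  proof (rule core0I)
    show "range (ln w) \<subseteq> A" using ln_A[OF w] by blast
    show "range (ln w) \<noteq> {}" by blast
    show "f ` range (ln w) \<subseteq> range (ln w)" using ln_f[OF w] by auto
    show "\<forall>y\<in>range (ln w). \<beta> y \<in> range (ln w) \<and> f (\<beta> y) = y"
      using ln_f[OF w] iv unfolding \<beta>_def by auto
    show "\<forall>q\<in>range (ln w). \<exists>a b. \<forall>x\<in>range (ln w). f x = q \<longrightarrow> x = a \<or> x = b"
    proof
      fix q assume "q \<in> range (ln w)"
      then obtain k where q: "q = ln w k" by blast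
      have "\<forall>x\<in>range (ln w). f x = q \<longrightarrow> x = ln w (k - 1)"
      proof (intro ballI impI)
        fix x assume "x \<in> range (ln w)" "f x = q"
        then obtain j where j: "x = ln w j" "ln w (j + 1) = ln w k" using ln_f[OF w] q by auto
        then have "j + 1 = k" using inj by (simp add: inj_eq)
        then have "j = k - 1" by linarith
        then show "x = ln w (k - 1)" using j by simp
      qed
      then show "\<exists>a b. \<forall>x\<in>range (ln w). f x = q \<longrightarrow> x = a \<or> x = b" by blast
    qed
    have iso: "alg_iso (range (ln w)) f Z_car Z_fun"
    proof (rule alg_iso_inv)
      show "bij_betw (ln w) Z_car (range (ln w))" using inj unfolding Z_car_def by (simp add: bij_betw_def)
      show "\<forall>x\<in>Z_car. ln w (Z_fun x) = f (ln w x)" using ln_f[OF w] by (simp add: Z_fun_def)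
      show "Z_fun ` Z_car \<subseteq> Z_car" by (simp add: Z_car_def)
    qed
    show "S0 (range (ln w)) f" unfolding S0_def mono_alg_def using iso ln_f[OF w] by auto
  qed
qed

definition Ecore :: "'a \<Rightarrow> 'a \<Rightarrow> 'a set" where
  "Ecore u v = range (ln u) \<union> range (chn v)"

lemma Ecore_core0:
  assumes ac: "\<forall>z\<in>A. \<forall>n. (f ^^ Suc n) z \<noteq> z" and uv: "u \<in> K" "v \<in> K" "f u = f v" "u \<noteq> v"
  shows "core0 A f (Ecore u v)"
proof -
  have injl: "inj (ln u)" using ln_inj[OF ac uv(1)] .
  have injc: "inj (chn v)" using chn_inj[OF ac uv(2)] .
  have fv: "f v = ln u 1" using uv(3) ln_f[OF uv(1), of 0] ln_0 by simp
  have disj: "ln u k \<noteq> chn v j" for k j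
  proof
    assume e: "ln u k = chn v j"
    have "v = (f ^^ j) (chn v j)" using chn_pow[OF uv(2), of j 0] chn(1)[OF uv(2)] by simp
    also have "\<dots> = ln u (k + int j)" using e[symmetric] ln_pow[OF uv(1)] by simp
    finally have v: "v = ln u (k + int j)" .
    then have "ln u (k + int j + 1) = ln u 1" using fv ln_f[OF uv(1)] by simp
    then have "k + int j = 0" using injl by (simp add: inj_eq)
    then show False using v ln_0 uv(4) by simp
  qed
  have ivl: "inv (ln u) (ln u k) = k" for k using injl by simp
  have ivc: "inv (chn v) (chn v k) = k" for k using injc by simp
  define \<beta> where "\<beta> y = (if y \<in> range (ln u) then ln u (inv (ln u) y - 1) else chn v (Suc (inv (chn v) y)))" for y
  define H where "H = Ecore u v"
  have H: "H = range (ln u) \<union> range (chn v)" by (simp add: H_def Ecore_def)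
  have fc: "f (chn v j) \<in> H" for j
  proof (cases j)
    case 0 then show ?thesis using fv chn(1)[OF uv(2)] H by auto
  next
    case (Suc i) then show ?thesis using chn(3)[OF uv(2)] H by auto
  qed
  show ?thesis unfolding H_def[symmetric]
  proof (rule core0I)
    show "H \<subseteq> A" using ln_A[OF uv(1)] chn(2)[OF uv(2)] H by auto
    show "H \<noteq> {}" using H by blast
    show "f ` H \<subseteq> H" using ln_f[OF uv(1)] fc H by auto
    show "\<forall>y\<in>H. \<beta> y \<in> H \<and> f (\<beta> y) = y"
    proof
      fix y assume "y \<in> H"
      then consider k where "y = ln u k" | j where "y = chn v j" "y \<notin> range (ln u)" using H by blast
      then show "\<beta> y \<in> H \<and> f (\<beta> y) = y"
      proof cases
        case 1 then show ?thesis using ivl ln_f[OF uv(1)] H unfolding \<beta>_def by auto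
      next
        case 2 then show ?thesis using ivc chn(3)[OF uv(2)] H unfolding \<beta>_def by auto
      qed
    qed
    show "\<forall>q\<in>H. \<exists>a b. \<forall>x\<in>H. f x = q \<longrightarrow> x = a \<or> x = b"
    proof
      fix q assume "q \<in> H"
      then consider k where "q = ln u k" | i where "q = chn v i" using H by blast
      then show "\<exists>a b. \<forall>x\<in>H. f x = q \<longrightarrow> x = a \<or> x = b"
      proof cases
        case 1
        have "\<forall>x\<in>H. f x = q \<longrightarrow> x = ln u (k - 1) \<or> x = v"
        proof (intro ballI impI)
          fix x assume x: "x \<in> H" "f x = q"
          then consider j where "x = ln u j" | j where "x = chn v j" using H by blast
          then show "x = ln u (k - 1) \<or> x = v"
          proof cases
            case (1 j)
            then have "ln u (j + 1) = ln u k" using x ln_f[OF uv(1)] \<open>q = ln u k\<close> by simp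
            then have "j + 1 = k" using injl by (simp add: inj_eq)
            then have "j = k - 1" by linarith
            then show ?thesis using 1 by simp
          next
            case (2 j)
            show ?thesis
            proof (cases j)
              case 0 then show ?thesis using 2 chn(1)[OF uv(2)] by simp
            next
              case (Suc i)
              then have "chn v i = ln u k" using 2 x chn(3)[OF uv(2)] \<open>q = ln u k\<close> by simp
              then show ?thesis using disj by metis
            qed
          qed
        qed
        then show ?thesis by blast
      next
        case 2
        have "\<forall>x\<in>H. f x = q \<longrightarrow> x = chn v (Suc i)"
        proof (intro ballI impI)
          fix x assume x: "x \<in> H" "f x = q"
          then consider j where "x = ln u j" | j where "x = chn v j" using H by blast
          then show "x = chn v (Suc i)"
          proof cases
            case (1 j)
            then have "ln u (j + 1) = chn v i" using x ln_f[OF uv(1)] \<open>q = chn v i\<close> by simp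
            then show ?thesis using disj by metis
          next
            case (2 j)
            show ?thesis
            proof (cases j)
              case 0
              then have "ln u 1 = chn v i" using 2 x fv chn(1)[OF uv(2)] \<open>q = chn v i\<close> by simp
              then show ?thesis using disj by metis
            next
              case (Suc j')
              then have "chn v j' = chn v i" using 2 x chn(3)[OF uv(2)] \<open>q = chn v i\<close> by simp
              then have "j' = i" using injc by (simp add: inj_eq)
              then show ?thesis using 2 Suc by simp
            qed
          qed
        qed
        then show ?thesis by blast
      qed
    qed
    define \<psi> where "\<psi> x = (case x of Inl k \<Rightarrow> ln u (k + 1) | Inr k \<Rightarrow> chn v (k - 1))" for x
    have iso: "alg_iso H f E_car E_fun"
    proof (rule alg_iso_inv)
      show "bij_betw \<psi> E_car H"
        unfolding bij_betw_def
      proof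
        show "inj_on \<psi> E_car"
        proof (rule inj_onI)
          fix x y assume xy: "x \<in> E_car" "y \<in> E_car" "\<psi> x = \<psi> y"
          show "x = y"
          proof (cases x)
            case (Inl a)
            show ?thesis
            proof (cases y)
              case (Inl b) then show ?thesis using xy \<open>x = Inl a\<close> injl by (simp add: \<psi>_def inj_eq)
            next
              case (Inr b) then show ?thesis using xy \<open>x = Inl a\<close> disj by (simp add: \<psi>_def)
            qed
          next
            case (Inr a)
            show ?thesis
            proof (cases y)
              case (Inl b) then show ?thesis using xy \<open>x = Inr a\<close> disj by (simp add: \<psi>_def) metis
            next
              case (Inr b)
              then have "a \<ge> 1" "b \<ge> 1" using xy \<open>x = Inr a\<close> by (auto simp: E_car_def)
              then show ?thesis using xy \<open>x = Inr a\<close> Inr injc by (simp add: \<psi>_def inj_eq)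
            qed
          qed
        qed
        show "\<psi> ` E_car = H"
        proof
          show "\<psi> ` E_car \<subseteq> H" unfolding H \<psi>_def E_car_def by auto
          show "H \<subseteq> \<psi> ` E_car"
          proof
            fix y assume "y \<in> H"
            then consider k where "y = ln u k" | j where "y = chn v j" using H by blast
            then show "y \<in> \<psi> ` E_car"
            proof cases
              case 1
              then have "y = \<psi> (Inl (k - 1))" by (simp add: \<psi>_def)
              then show ?thesis unfolding E_car_def by blast
            next
              case 2
              then have "y = \<psi> (Inr (Suc j))" by (simp add: \<psi>_def)
              then show ?thesis unfolding E_car_def by force
            qed
          qed
        qed
      qed
      show "\<forall>x\<in>E_car. \<psi> (E_fun x) = f (\<psi> x)"
      proof
        fix x assume x: "x \<in> E_car"
        show "\<psi> (E_fun x) = f (\<psi> x)"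
        proof (cases x)
          case (Inl k) then show ?thesis using ln_f[OF uv(1)] by (simp add: \<psi>_def E_fun_def add.assoc)
        next
          case (Inr k)
          then have k: "k \<ge> 1" using x by (auto simp: E_car_def)
          show ?thesis
          proof (cases "k > 1")
            case True
            then have "k - 1 = Suc (k - 1 - 1)" by simp
            then show ?thesis using Inr True chn(3)[OF uv(2), of "k - 1 - 1"] by (simp add: \<psi>_def E_fun_def)
          next
            case False
            then have "k = 1" using k by simp
            then show ?thesis using Inr fv chn(1)[OF uv(2)] by (simp add: \<psi>_def E_fun_def)
          qed
        qed
      qed
      show "E_fun ` E_car \<subseteq> E_car" unfolding E_car_def E_fun_def by auto
    qed
    show "S0 H f" unfolding S0_def mono_alg_def using iso \<open>f ` H \<subseteq> H\<close> H by auto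
  qed
qed

lemma caseL:
  assumes ac: "\<forall>z\<in>A. \<forall>n. (f ^^ Suc n) z \<noteq> z" and Kne: "K \<noteq> {}"
  shows "\<exists>B. (\<forall>M\<in>B. retract A f M \<and> S_class M f) \<and> in_V B f A f \<and> (\<forall>M\<in>B. in_V {A} f M f)"
proof -
  define KC where "KC = {range (ln w) | w. w \<in> K}"
  define J' where "J' = {(Ecore u v, 0::nat) | u v. u \<in> K \<and> v \<in> K \<and> f u = f v \<and> u \<noteq> v}"
  have KC: "\<forall>K0\<in>KC. core0 A f K0" using Line_core0[OF ac] KC_def by auto
  have cover: "\<forall>w\<in>K. \<exists>K0\<in>KC. w \<in> K0" using ln_0 KC_def by (metis (mono_tags, lifting) mem_Collect_eq rangeI)
  have E: "core0 A f (Ecore u v)" if "u \<in> K" "v \<in> K" "f u = f v" "u \<noteq> v" for u v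
    using Ecore_core0[OF ac that] .
  have J'1: "\<forall>j\<in>J'. retract A f (fst j) \<and> S_class (fst j) f"
    using E core0_props unfolding J'_def S_class_def by fastforce
  have J'2: "\<forall>j\<in>J'. snd j \<noteq> 0 \<longrightarrow> (\<forall>x\<in>A. (\<lambda>j x. x) j x \<in> fst j \<and> (\<lambda>j x. x) j (f x) = f ((\<lambda>j x. x) j x))"
    unfolding J'_def by auto
  have sep: "\<forall>u\<in>K. \<forall>v\<in>K. f u = f v \<and> u \<noteq> v \<longrightarrow> (\<exists>j\<in>J'. (if snd j = 0 then retr A f (fst j) else (\<lambda>j x. x) j) u \<noteq>
        (if snd j = 0 then retr A f (fst j) else (\<lambda>j x. x) j) v)"
  proof (intro ballI impI)
    fix u v assume uv: "u \<in> K" "v \<in> K" "f u = f v \<and> u \<noteq> v"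
    have j: "(Ecore u v, 0) \<in> J'" using uv unfolding J'_def by blast
    have r: "isret A f (Ecore u v) (retr A f (Ecore u v))"
      using retr_isret core0_props(2)[OF E] uv by blast
    have "u \<in> Ecore u v" "v \<in> Ecore u v" unfolding Ecore_def using ln_0 chn(1)[OF uv(2)] by (metis UnI1 rangeI, metis UnI2 rangeI)
    then have "retr A f (Ecore u v) u = u" "retr A f (Ecore u v) v = v" using r unfolding isret_def by auto
    then show "\<exists>j\<in>J'. (if snd j = 0 then retr A f (fst j) else (\<lambda>j x. x) j) u \<noteq>
        (if snd j = 0 then retr A f (fst j) else (\<lambda>j x. x) j) v" using j uv by force
  qed
  show ?thesis using core_assemble[OF Kne KC cover J'1 J'2 sep] .
qed

end

locale cac = ca +
  fixes c0 :: 'a and p0 :: nat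
  assumes c0: "c0 \<in> A" "(f ^^ Suc p0) c0 = c0"
begin

definition Cy :: "'a set" where "Cy = {x \<in> A. \<exists>q. (f ^^ Suc q) x = x}"
definition per :: nat where "per = Suc (LEAST q. (f ^^ Suc q) c0 = c0)"

lemma per_pos: "per \<ge> 1" by (simp add: per_def)
lemma per_c0: "(f ^^ per) c0 = c0" unfolding per_def using c0(2) by (meson LeastI)
lemma per_min: "(f ^^ Suc q) c0 = c0 \<Longrightarrow> per \<le> Suc q" unfolding per_def by (simp add: Least_le)

lemma Cy_A: "Cy \<subseteq> A" by (auto simp: Cy_def)
lemma c0_Cy: "c0 \<in> Cy" using c0 by (auto simp: Cy_def)
lemma fCy: "f ` Cy \<subseteq> Cy"
proof
  fix y assume "y \<in> f ` Cy"
  then obtain x q where x: "y = f x" "x \<in> A" "(f ^^ Suc q) x = x" unfolding Cy_def by blast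
  have "(f ^^ Suc q) (f x) = f x" using x(3) by (metis funpow_swap1)
  then show "y \<in> Cy" using x fin unfolding Cy_def by blast
qed
lemma Cy_K: "Cy \<subseteq> K" using cyc_Ainf unfolding Cy_def by blast

lemma Cy_rel: assumes "c \<in> Cy" "c' \<in> Cy" shows "\<exists>i. c' = (f ^^ i) c"
  using same_cycle assms unfolding Cy_def by blast

lemma pow_mult_per: assumes "c \<in> Cy" shows "(f ^^ (per * q + i)) c = (f ^^ i) c"
proof -
  obtain r where r: "c = (f ^^ r) c0" using Cy_rel[OF c0_Cy assms] by blast
  have "(f ^^ (per * q)) c0 = c0" using per_c0 per_pos cyc_mult[of "per - 1" c0 q] by simp
  then have "(f ^^ (per * q)) c = c" using r by (metis funpow_plus add.commute)
  then show ?thesis by (metis funpow_plus add.commute)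
qed

lemma per_all: "c \<in> Cy \<Longrightarrow> (f ^^ per) c = c"
  using pow_mult_per[of c 1 0] by simp

lemma per_min_all: assumes "c \<in> Cy" "0 < m" "(f ^^ m) c = c" shows "per \<le> m"
proof -
  obtain s where s: "c0 = (f ^^ s) c" using Cy_rel[OF assms(1) c0_Cy] by blast
  have "(f ^^ m) c0 = c0" using s assms(3) by (metis funpow_plus add.commute)
  moreover obtain q where "m = Suc q" using assms(2) by (cases m) auto
  ultimately show ?thesis using per_min by simp
qed

lemma cyc_inj: assumes "c \<in> Cy" "i < per" "j < per" "(f ^^ i) c = (f ^^ j) c" shows "i = j"
proof (rule ccontr)
  assume ne: "i \<noteq> j"
  have gen: False if "a < b" "b < per" "(f ^^ a) c = (f ^^ b) c" for a b
  proof -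
    have e: "(f ^^ Suc (b - a - 1)) ((f ^^ a) c) = (f ^^ a) c" using cyc_of_eq[OF that(3,1)] .
    have "(f ^^ a) c \<in> Cy" using pow_closed[OF fCy assms(1)] .
    then have "per \<le> Suc (b - a - 1)" using per_min_all e by blast
    then show False using that by simp
  qed
  show False using ne gen[of i j] gen[of j i] assms by (metis linorder_neqE_nat)
qed

lemma Cy_enum: assumes "c \<in> Cy" shows "Cy = (\<lambda>i. (f ^^ i) c) ` {..<per}"
proof
  show "(\<lambda>i. (f ^^ i) c) ` {..<per} \<subseteq> Cy" using pow_closed[OF fCy assms] by blast
  show "Cy \<subseteq> (\<lambda>i. (f ^^ i) c) ` {..<per}"
  proof
    fix x assume "x \<in> Cy"
    then obtain r where r: "x = (f ^^ r) c" using Cy_rel[OF assms] by blast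
    have "r = per * (r div per) + r mod per" by simp
    then have "x = (f ^^ (r mod per)) c" using r pow_mult_per[OF assms] by metis
    moreover have "r mod per < per" using per_pos by simp
    ultimately show "x \<in> (\<lambda>i. (f ^^ i) c) ` {..<per}" by blast
  qed
qed

definition cp :: "'a \<Rightarrow> 'a" where "cp y = (f ^^ (per - 1)) y"

lemma cp: assumes "y \<in> Cy" shows "cp y \<in> Cy" "f (cp y) = y" "cp (f y) = y"
proof -
  show "cp y \<in> Cy" unfolding cp_def using pow_closed[OF fCy assms] .
  have "f (cp y) = (f ^^ per) y" unfolding cp_def using per_pos by (metis Suc_diff_1 funpow.simps(2) less_le_trans o_apply zero_less_one)
  then show "f (cp y) = y" using per_all assms by simp
  have "cp (f y) = (f ^^ per) y" unfolding cp_def using per_pos by (metis Suc_diff_1 funpow_Suc_right less_le_trans o_apply zero_less_one)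
  then show "cp (f y) = y" using per_all assms by simp
qed

lemma Cy_sib: "x \<in> Cy \<Longrightarrow> y \<in> Cy \<Longrightarrow> f x = f y \<Longrightarrow> x = y"
  using cp(3) by metis

lemma Cy_core0: "core0 A f Cy"
proof (rule core0I)
  show "Cy \<subseteq> A" by (rule Cy_A)
  show "Cy \<noteq> {}" using c0_Cy by blast
  show "f ` Cy \<subseteq> Cy" by (rule fCy)
  show "\<forall>y\<in>Cy. cp y \<in> Cy \<and> f (cp y) = y" using cp by blast
  show "\<forall>q\<in>Cy. \<exists>a b. \<forall>x\<in>Cy. f x = q \<longrightarrow> x = a \<or> x = b" using cp by metis
  define \<psi> where "\<psi> i = (f ^^ nat i) c0" for i :: int
  have iso: "alg_iso Cy f (cyc_car per) (cyc_fun per)"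
  proof (rule alg_iso_inv)
    show "bij_betw \<psi> (cyc_car per) Cy"
      unfolding bij_betw_def
    proof
      show "inj_on \<psi> (cyc_car per)"
      proof (rule inj_onI)
        fix i j assume ij: "i \<in> cyc_car per" "j \<in> cyc_car per" "\<psi> i = \<psi> j"
        then have "nat i = nat j" using cyc_inj[OF c0_Cy, of "nat i" "nat j"] by (auto simp: cyc_car_def \<psi>_def)
        then show "i = j" using ij by (auto simp: cyc_car_def)
      qed
      show "\<psi> ` cyc_car per = Cy"
      proof -
        have "\<psi> ` cyc_car per = (\<lambda>i. (f ^^ i) c0) ` {..<per}"
        proof
          show "\<psi> ` cyc_car per \<subseteq> (\<lambda>i. (f ^^ i) c0) ` {..<per}" by (auto simp: \<psi>_def cyc_car_def)
          show "(\<lambda>i. (f ^^ i) c0) ` {..<per} \<subseteq> \<psi> ` cyc_car per"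
          proof
            fix x assume "x \<in> (\<lambda>i. (f ^^ i) c0) ` {..<per}"
            then obtain i where "i < per" "x = (f ^^ i) c0" by blast
            then have "x = \<psi> (int i)" "int i \<in> cyc_car per" by (auto simp: \<psi>_def cyc_car_def)
            then show "x \<in> \<psi> ` cyc_car per" by blast
          qed
        qed
        then show ?thesis using Cy_enum[OF c0_Cy] by simp
      qed
    qed
    show "\<forall>x\<in>cyc_car per. \<psi> (cyc_fun per x) = f (\<psi> x)"
    proof
      fix i assume i: "i \<in> cyc_car per"
      show "\<psi> (cyc_fun per i) = f (\<psi> i)"
      proof (cases "i + 1 < int per")
        case True
        then have "cyc_fun per i = i + 1" using i by (simp add: cyc_fun_def cyc_car_def)
        moreover have "nat (i + 1) = Suc (nat i)" using i Suc_nat_eq_nat_zadd1[of i] by (simp add: cyc_car_def add.commute)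
        ultimately show ?thesis by (simp add: \<psi>_def)
      next
        case False
        then have "i + 1 = int per" using i by (simp add: cyc_car_def)
        then have "cyc_fun per i = 0" by (simp add: cyc_fun_def)
        moreover have "f (\<psi> i) = (f ^^ per) c0"
        proof -
          have "per = Suc (nat i)" using \<open>i + 1 = int per\<close> i by (simp add: cyc_car_def)
          then show ?thesis by (simp add: \<psi>_def)
        qed
        ultimately show ?thesis using per_c0 by (simp add: \<psi>_def)
      qed
    qed
    show "cyc_fun per ` cyc_car per \<subseteq> cyc_car per"
      using per_pos by (auto simp: cyc_fun_def cyc_car_def)
  qed
  show "S0 Cy f" unfolding S0_def mono_alg_def using iso fCy c0_Cy per_pos by blast
qed

definition D :: "'a \<Rightarrow> nat" where "D x = (LEAST d. (f ^^ d) x \<in> Cy)"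

lemma D_in: assumes "x \<in> A" shows "(f ^^ D x) x \<in> Cy"
proof -
  obtain t where "(f ^^ t) x \<in> Cy" using reach_sub[OF Cy_A _ fCy assms] c0_Cy by blast
  then show ?thesis unfolding D_def by (meson LeastI)
qed

lemma D_le: "(f ^^ d) x \<in> Cy \<Longrightarrow> D x \<le> d" unfolding D_def by (meson Least_le)

lemma D0: "x \<in> Cy \<Longrightarrow> D x = 0" using D_le[of 0 x] by simp

lemma D_pos: "x \<in> A \<Longrightarrow> x \<notin> Cy \<Longrightarrow> D x = Suc (D (f x))"
proof -
  assume x: "x \<in> A" "x \<notin> Cy"
  obtain t where t: "(f ^^ t) x \<in> Cy" using D_in x by blast
  have z0: "\<not> (f ^^ 0) x \<in> Cy" using x by simp
  have "D (f x) = (LEAST k. (f ^^ Suc k) x \<in> Cy)" unfolding D_def by (simp add: funpow_swap1)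
  also have "\<dots> = (LEAST k. (f ^^ k) x \<in> Cy) - 1" by (rule Least_Suc_minus[of "\<lambda>k. (f ^^ k) x \<in> Cy" t, OF t z0])
  finally have "D (f x) = D x - 1" unfolding D_def .
  moreover have "D x \<noteq> 0" using D_in[OF x(1)] x(2) by (metis funpow_0)
  ultimately show ?thesis by simp
qed

definition ray :: "'a \<Rightarrow> nat \<Rightarrow> 'a" where
  "ray w j = (if j \<le> D w then (f ^^ (D w - j)) w else chn w (j - D w))"

context
  fixes w assumes w: "w \<in> K" "w \<notin> Cy"
begin

lemma wA: "w \<in> A" using w K_sub by blast

lemma ray_f: "f (ray w (Suc j)) = ray w j"
proof (cases "Suc j \<le> D w")
  case True
  then have "D w - j = Suc (D w - Suc j)" by simp
  then show ?thesis using True by (simp add: ray_def)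
next
  case False
  show ?thesis
  proof (cases "j = D w")
    case True then show ?thesis using chn(1,3)[OF w(1)] by (simp add: ray_def)
  next
    case False2: False
    then have "Suc j - D w = Suc (j - D w)" "\<not> j \<le> D w" using False by auto
    then show ?thesis using False chn(3)[OF w(1)] by (simp add: ray_def)
  qed
qed

lemma ray_A: "ray w j \<in> A"
  unfolding ray_def using powin[OF wA] chn(2)[OF w(1)] by auto

lemma ray_D: "ray w (D w) = w" by (simp add: ray_def)

lemma ray_0: "ray w 0 \<in> Cy" unfolding ray_def using D_in[OF wA] by simp

lemma ray_pow: "(f ^^ m) (ray w (m + j)) = ray w j"
proof (induction m)
  case (Suc m)
  have "(f ^^ Suc m) (ray w (Suc m + j)) = (f ^^ m) (f (ray w (Suc (m + j))))"
    by (simp add: funpow_swap1)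
  then show ?case using Suc ray_f by simp
qed simp

lemma ray_notCy: assumes "j \<ge> 1" shows "ray w j \<notin> Cy"
proof
  assume a: "ray w j \<in> Cy"
  show False
  proof (cases "j \<le> D w")
    case True
    then have "(f ^^ (D w - j)) w \<in> Cy" using a by (simp add: ray_def)
    then have "D w \<le> D w - j" using D_le by blast
    then show False using assms True D_pos[OF wA w(2)] by simp
  next
    case False
    have "(f ^^ (j - D w)) (ray w (j - D w + D w)) = ray w (D w)" using ray_pow .
    then have "(f ^^ (j - D w)) (ray w j) = w" using False ray_D by simp
    then have "w \<in> Cy" using pow_closed[OF fCy a] by metis
    then show False using w by simp
  qed
qed

lemma ray_K: "ray w j \<in> K"
proof (cases "j \<le> D w")
  case True then show ?thesis unfolding ray_def using Ainf_pow[OF w(1) fA] by simp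
next
  case False then show ?thesis unfolding ray_def using chn_K[OF w(1)] by simp
qed

lemma ray_inj: "inj (ray w)"
proof (rule injI)
  fix i j assume e: "ray w i = ray w j"
  show "i = j"
  proof (rule ccontr)
    assume ne: "i \<noteq> j"
    have gen: False if "a < b" "ray w a = ray w b" for a b
    proof -
      have "(f ^^ (b - a)) (ray w (b - a + a)) = ray w a" using ray_pow .
      then have "(f ^^ Suc (b - a - 1)) (ray w b) = ray w b" using that by (simp add: Suc_diff_Suc)
      then have "ray w b \<in> Cy" using ray_A unfolding Cy_def by blast
      then show False using ray_notCy[of b] that by simp
    qed
    show False using ne gen[of i j] gen[of j i] e by (metis linorder_neqE_nat)
  qed
qed

lemma D_ray: "D (ray w j) = j"
proof (rule antisym)
  show "D (ray w j) \<le> j" using D_le ray_pow[of j 0] ray_0 by simp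
  show "j \<le> D (ray w j)"
  proof (rule ccontr)
    assume "\<not> j \<le> D (ray w j)"
    then have lt: "D (ray w j) < j" by simp
    have "(f ^^ D (ray w j)) (ray w (D (ray w j) + (j - D (ray w j)))) = ray w (j - D (ray w j))"
      using ray_pow .
    then have "(f ^^ D (ray w j)) (ray w j) = ray w (j - D (ray w j))" using lt by simp
    moreover have "(f ^^ D (ray w j)) (ray w j) \<in> Cy" using D_in ray_A by blast
    ultimately show False using ray_notCy[of "j - D (ray w j)"] lt by simp
  qed
qed

definition Hat :: "'a set" where "Hat = Cy \<union> range (ray w)"

lemma Hat_core0: "core0 A f Hat"
proof -
  have inj: "inj (ray w)" using ray_inj .
  have iv: "inv (ray w) (ray w k) = k" for k using inj by simp
  define \<beta> where "\<beta> y = (if y \<in> range (ray w) then ray w (Suc (inv (ray w) y)) else cp y)" for y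
  have fH: "f ` Hat \<subseteq> Hat"
  proof
    fix y assume "y \<in> f ` Hat"
    then obtain x where x: "x \<in> Hat" "y = f x" by blast
    then consider "x \<in> Cy" | j where "x = ray w j" unfolding Hat_def by blast
    then show "y \<in> Hat"
    proof cases
      case 1 then show ?thesis using fCy x unfolding Hat_def by blast
    next
      case (2 j)
      show ?thesis
      proof (cases j)
        case 0 then show ?thesis using 2 x ray_0 fCy unfolding Hat_def by blast
      next
        case (Suc i) then show ?thesis using 2 x ray_f unfolding Hat_def by auto
      qed
    qed
  qed
  show ?thesis
  proof (rule core0I)
    show "Hat \<subseteq> A" using Cy_A ray_A unfolding Hat_def by blast
    show "Hat \<noteq> {}" unfolding Hat_def by blast
    show "f ` Hat \<subseteq> Hat" by (rule fH)
    show "\<forall>y\<in>Hat. \<beta> y \<in> Hat \<and> f (\<beta> y) = y"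
    proof
      fix y assume "y \<in> Hat"
      then consider k where "y = ray w k" | "y \<in> Cy" "y \<notin> range (ray w)" unfolding Hat_def by blast
      then show "\<beta> y \<in> Hat \<and> f (\<beta> y) = y"
      proof cases
        case 1 then show ?thesis using iv ray_f unfolding \<beta>_def Hat_def by auto
      next
        case 2 then show ?thesis using cp unfolding \<beta>_def Hat_def by auto
      qed
    qed
    show "\<forall>q\<in>Hat. \<exists>a b. \<forall>x\<in>Hat. f x = q \<longrightarrow> x = a \<or> x = b"
    proof
      fix q assume q: "q \<in> Hat"
      show "\<exists>a b. \<forall>x\<in>Hat. f x = q \<longrightarrow> x = a \<or> x = b"
      proof (cases "q \<in> Cy")
        case True
        have "\<forall>x\<in>Hat. f x = q \<longrightarrow> x = cp q \<or> x = ray w 1"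
        proof (intro ballI impI)
          fix x assume x: "x \<in> Hat" "f x = q"
          show "x = cp q \<or> x = ray w 1"
          proof (cases "x \<in> Cy")
            case True then show ?thesis using cp(3)[OF True] x by simp
          next
            case False
            then obtain j where j: "x = ray w j" using x unfolding Hat_def by blast
            have "j \<noteq> 0" using False ray_0 j by (metis)
            then obtain i where i: "j = Suc i" by (cases j) auto
            then have "ray w i \<in> Cy" using x j ray_f True by simp
            then have "i = 0" using ray_notCy[of i] by (cases i) auto
            then show ?thesis using i j by simp
          qed
        qed
        then show ?thesis by blast
      next
        case False
        then obtain i where i: "q = ray w i" using q unfolding Hat_def by blast
        have "\<forall>x\<in>Hat. f x = q \<longrightarrow> x = ray w (Suc i)"
        proof (intro ballI impI)
          fix x assume x: "x \<in> Hat" "f x = q"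
          show "x = ray w (Suc i)"
          proof (cases "x \<in> Cy")
            case True then show ?thesis using fCy x False by blast
          next
            case xC: False
            then obtain j where j: "x = ray w j" using x unfolding Hat_def by blast
            have "j \<noteq> 0" using xC ray_0 j by (metis)
            then obtain k where k: "j = Suc k" by (cases j) auto
            then have "ray w k = ray w i" using x j ray_f i by simp
            then have "k = i" using inj by (simp add: inj_eq)
            then show ?thesis using k j by simp
          qed
        qed
        then show ?thesis by blast
      qed
    qed
    define c where "c = ray w 0"
    have cC: "c \<in> Cy" using ray_0 c_def by simp
    define \<psi> where "\<psi> x = (case x of Inl i \<Rightarrow> (f ^^ nat i) c | Inr k \<Rightarrow> ray w k)" for x
    have iso: "alg_iso Hat f (hat_car per) (hat_fun per)"
    proof (rule alg_iso_inv)
      show "bij_betw \<psi> (hat_car per) Hat"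
        unfolding bij_betw_def
      proof
        show "inj_on \<psi> (hat_car per)"
        proof (rule inj_onI)
          fix x y assume xy: "x \<in> hat_car per" "y \<in> hat_car per" "\<psi> x = \<psi> y"
          have inC: "(f ^^ n) c \<in> Cy" for n using pow_closed[OF fCy cC] .
          show "x = y"
          proof (cases x)
            case (Inl a)
            show ?thesis
            proof (cases y)
              case (Inl b)
              then have "nat a = nat b" using cyc_inj[OF cC, of "nat a" "nat b"] xy \<open>x = Inl a\<close>
                by (auto simp: hat_car_def \<psi>_def)
              then show ?thesis using xy \<open>x = Inl a\<close> Inl by (auto simp: hat_car_def)
            next
              case (Inr b)
              then have "b \<ge> 1" using xy by (auto simp: hat_car_def)
              then have "ray w b \<notin> Cy" using ray_notCy by blast
              moreover have "(f ^^ nat a) c = ray w b" using xy \<open>x = Inl a\<close> Inr by (simp add: \<psi>_def)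
              ultimately show ?thesis using inC[of "nat a"] by simp
            qed
          next
            case (Inr a)
            then have a1: "a \<ge> 1" using xy by (auto simp: hat_car_def)
            show ?thesis
            proof (cases y)
              case (Inl b)
              have "ray w a \<notin> Cy" using ray_notCy[OF a1] .
              moreover have "(f ^^ nat b) c = ray w a" using xy \<open>x = Inr a\<close> Inl by (simp add: \<psi>_def)
              ultimately show ?thesis using inC[of "nat b"] by simp
            next
              case (Inr b) then show ?thesis using xy \<open>x = Inr a\<close> inj by (simp add: \<psi>_def inj_eq)
            qed
          qed
        qed
        show "\<psi> ` hat_car per = Hat"
        proof
          show "\<psi> ` hat_car per \<subseteq> Hat"
            using pow_closed[OF fCy cC] unfolding Hat_def hat_car_def \<psi>_def by auto
          show "Hat \<subseteq> \<psi> ` hat_car per"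
          proof
            fix y assume "y \<in> Hat"
            then consider "y \<in> Cy" | k where "y = ray w k" "k \<ge> 1" unfolding Hat_def
              using ray_0 by (metis UnE imageE less_one not_le)
            then show "y \<in> \<psi> ` hat_car per"
            proof cases
              case 1
              then obtain i where i: "i < per" "y = (f ^^ i) c" using Cy_enum[OF cC] by blast
              then have "y = \<psi> (Inl (int i))" "Inl (int i) \<in> hat_car per" by (auto simp: \<psi>_def hat_car_def)
              then show ?thesis by blast
            next
              case (2 k)
              then have "y = \<psi> (Inr k)" "Inr k \<in> hat_car per" by (auto simp: \<psi>_def hat_car_def)
              then show ?thesis by blast
            qed
          qed
        qed
      qed
      show "\<forall>x\<in>hat_car per. \<psi> (hat_fun per x) = f (\<psi> x)"
      proof
        fix x assume x: "x \<in> hat_car per"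
        show "\<psi> (hat_fun per x) = f (\<psi> x)"
        proof (cases x)
          case (Inl i)
          then have i: "0 \<le> i" "i < int per" using x by (auto simp: hat_car_def)
          show ?thesis
          proof (cases "i + 1 < int per")
            case True
            then have "(i + 1) mod int per = i + 1" using i by simp
            moreover have "nat (i + 1) = Suc (nat i)" using i Suc_nat_eq_nat_zadd1[of i] by (simp add: add.commute)
            ultimately show ?thesis using Inl by (simp add: \<psi>_def hat_fun_def)
          next
            case False
            then have e: "i + 1 = int per" using i by simp
            then have "(i + 1) mod int per = 0" by simp
            moreover have "per = Suc (nat i)" using e i by simp
            moreover have "(f ^^ per) c = c" using per_all cC by simp
            ultimately show ?thesis using Inl by (simp add: \<psi>_def hat_fun_def)
          qed
        next
          case (Inr k)
          then have k: "k \<ge> 1" using x by (auto simp: hat_car_def)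
          show ?thesis
          proof (cases "k > 1")
            case True
            then have "k = Suc (k - 1)" by simp
            then have "f (ray w k) = ray w (k - 1)" using ray_f by metis
            then show ?thesis using Inr True by (simp add: \<psi>_def hat_fun_def)
          next
            case False
            then have "k = 1" using k by simp
            then show ?thesis using Inr ray_f[of 0] by (simp add: \<psi>_def hat_fun_def c_def)
          qed
        qed
      qed
      show "hat_fun per ` hat_car per \<subseteq> hat_car per"
        using per_pos unfolding hat_fun_def hat_car_def by (auto split: sum.splits)
    qed
    show "S0 Hat f" unfolding S0_def mono_alg_def using iso fH per_pos unfolding Hat_def by blast
  qed
qed

lemma Hat_w: "w \<in> Hat" unfolding Hat_def using ray_D by (metis UnI2 rangeI)

lemma Cy_Hat: "Cy \<subseteq> Hat" unfolding Hat_def by blast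

end

end

context cac begin

definition rayel :: "'a set \<Rightarrow> nat \<Rightarrow> 'a" where
  "rayel M i = (THE y. y \<in> M \<and> y \<notin> Cy \<and> D y = i)"

lemma rayel_Hat: assumes w: "w \<in> K" "w \<notin> Cy" shows "rayel (Hat w) (D w) = w"
  unfolding rayel_def
proof (rule the_equality)
  show "w \<in> Hat w \<and> w \<notin> Cy \<and> D w = D w" using Hat_w[OF w] w by simp
  fix y assume y: "y \<in> Hat w \<and> y \<notin> Cy \<and> D y = D w"
  then obtain j where j: "y = ray w j" unfolding Hat_def[OF w] by blast
  then have "j = D w" using D_ray[OF w] y by simp
  then show "y = w" using j ray_D[OF w] by simp
qed

definition gsh :: "'a set \<Rightarrow> nat \<Rightarrow> 'a \<Rightarrow> 'a" where
  "gsh M k x = (if x \<in> Pset A f (rayel M (Suc k)) then retr A f M ((f ^^ k) x) else retr A f Cy ((f ^^ k) x))"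

lemma uPu: assumes "u \<in> K" "u \<notin> Cy" shows "f u \<notin> Pset A f u"
proof
  assume "f u \<in> Pset A f u"
  then obtain m where "(f ^^ m) (f u) = u" unfolding Pset_def by blast
  then have "(f ^^ Suc m) u = u" by (simp add: funpow_swap1)
  then show False using assms K_sub unfolding Cy_def by blast
qed

lemma gsh_hom:
  assumes u: "u \<in> K" "u \<notin> Cy"
  shows "\<forall>x\<in>A. gsh (Hat u) (D (f u)) x \<in> Hat u \<and> gsh (Hat u) (D (f u)) (f x) = f (gsh (Hat u) (D (f u)) x)"
proof
  fix x assume x: "x \<in> A"
  define k where "k = D (f u)"
  have uA: "u \<in> A" using u K_sub by blast
  have Du: "D u = Suc k" using D_pos[OF uA u(2)] k_def by simp
  have re: "rayel (Hat u) (Suc k) = u" using rayel_Hat[OF u] Du by simp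
  have R: "isret A f (Hat u) (retr A f (Hat u))"
    using retr_isret core0_props(2)[OF Hat_core0[OF u]] by blast
  have \<kappa>: "isret A f Cy (retr A f Cy)"
    using retr_isret core0_props(2)[OF Cy_core0] by blast
  have g: "gsh (Hat u) k y = (if y \<in> Pset A f u then retr A f (Hat u) ((f ^^ k) y) else retr A f Cy ((f ^^ k) y))" for y
    unfolding gsh_def re by simp
  have fkx: "(f ^^ k) x \<in> A" using powin x by blast
  have "gsh (Hat u) k x \<in> Hat u"
    using g R \<kappa> fkx Cy_Hat[OF u] unfolding isret_def by auto
  moreover have "gsh (Hat u) k (f x) = f (gsh (Hat u) k x)"
  proof (cases "x \<in> Pset A f u")
    case True
    show ?thesis
    proof (cases "x = u")
      case True
      have fuP: "f u \<notin> Pset A f u" using uPu[OF u] .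
      have inC: "(f ^^ k) (f u) \<in> Cy" using D_in[OF fin[OF uA]] k_def by simp
      have "gsh (Hat u) k (f x) = retr A f Cy ((f ^^ k) (f u))" using g fuP True by simp
      also have "\<dots> = (f ^^ k) (f u)" using \<kappa> inC unfolding isret_def by blast
      finally have l: "gsh (Hat u) k (f x) = (f ^^ k) (f u)" .
      have "f (gsh (Hat u) k x) = f (retr A f (Hat u) ((f ^^ k) u))" using g True Pset_root[OF uA] by simp
      also have "\<dots> = retr A f (Hat u) (f ((f ^^ k) u))" using R powin[OF uA] unfolding isret_def by metis
      also have "\<dots> = retr A f (Hat u) ((f ^^ k) (f u))" by (simp add: funpow_swap1)
      also have "\<dots> = (f ^^ k) (f u)" using R inC Cy_Hat[OF u] unfolding isret_def by blast
      finally show ?thesis using l by simp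
    next
      case False
      then have "f x \<in> Pset A f u" using Pset_step[OF fA] \<open>x \<in> Pset A f u\<close> by blast
      then have "gsh (Hat u) k (f x) = retr A f (Hat u) ((f ^^ k) (f x))" using g by simp
      also have "\<dots> = retr A f (Hat u) (f ((f ^^ k) x))" by (simp add: funpow_swap1)
      also have "\<dots> = f (retr A f (Hat u) ((f ^^ k) x))" using R fkx unfolding isret_def by blast
      finally show ?thesis using g \<open>x \<in> Pset A f u\<close> by simp
    qed
  next
    case False
    then have "f x \<notin> Pset A f u" using Pset_back x by metis
    then have "gsh (Hat u) k (f x) = retr A f Cy ((f ^^ k) (f x))" using g by simp
    also have "\<dots> = retr A f Cy (f ((f ^^ k) x))" by (simp add: funpow_swap1)
    also have "\<dots> = f (retr A f Cy ((f ^^ k) x))" using \<kappa> fkx unfolding isret_def by blast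
    finally show ?thesis using g False by simp
  qed
  ultimately show "gsh (Hat u) (D (f u)) x \<in> Hat u \<and> gsh (Hat u) (D (f u)) (f x) = f (gsh (Hat u) (D (f u)) x)"
    using k_def by simp
qed

lemma gsh_sep:
  assumes u: "u \<in> K" "u \<notin> Cy" and v: "v \<in> K" "v \<notin> Cy" and uv: "f u = f v" "u \<noteq> v"
  shows "gsh (Hat u) (D (f u)) u \<noteq> gsh (Hat u) (D (f u)) v"
proof -
  define k where "k = D (f u)"
  have uA: "u \<in> A" using u K_sub by blast
  have vA: "v \<in> A" using v K_sub by blast
  have Du: "D u = Suc k" using D_pos[OF uA u(2)] k_def by simp
  have re: "rayel (Hat u) (Suc k) = u" using rayel_Hat[OF u] Du by simp
  have R: "isret A f (Hat u) (retr A f (Hat u))"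
    using retr_isret core0_props(2)[OF Hat_core0[OF u]] by blast
  have \<kappa>: "isret A f Cy (retr A f Cy)"
    using retr_isret core0_props(2)[OF Cy_core0] by blast
  have g: "gsh (Hat u) k y = (if y \<in> Pset A f u then retr A f (Hat u) ((f ^^ k) y) else retr A f Cy ((f ^^ k) y))" for y
    unfolding gsh_def re by simp
  have vP: "v \<notin> Pset A f u"
  proof
    assume "v \<in> Pset A f u"
    then obtain m where m: "(f ^^ m) v = u" unfolding Pset_def by blast
    show False
    proof (cases m)
      case 0 then show False using m uv by simp
    next
      case (Suc m')
      then have "(f ^^ m') (f u) = u" using m uv by (simp add: funpow_swap1)
      then have "(f ^^ Suc m') u = u" by (simp add: funpow_swap1)
      then show False using u uA unfolding Cy_def by blast
    qed
  qed
  have fku: "(f ^^ k) u = ray u 1"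
  proof -
    have "(f ^^ k) (ray u (k + 1)) = ray u 1" using ray_pow[OF u] .
    then show ?thesis using ray_D[OF u] Du by simp
  qed
  have "gsh (Hat u) k u = retr A f (Hat u) (ray u 1)" using g fku Pset_root[OF uA] by simp
  also have "\<dots> = ray u 1" using R unfolding isret_def Hat_def[OF u] by blast
  finally have gu: "gsh (Hat u) k u \<notin> Cy" using ray_notCy[OF u, of 1] by simp
  have "gsh (Hat u) k v \<in> Cy" using g vP \<kappa> powin[OF vA] unfolding isret_def by auto
  then show ?thesis using gu k_def by metis
qed

lemma caseC:
  shows "\<exists>B. (\<forall>M\<in>B. retract A f M \<and> S_class M f) \<and> in_V B f A f \<and> (\<forall>M\<in>B. in_V {A} f M f)"
proof -
  define KC where "KC = {Cy} \<union> {Hat w | w. w \<in> K \<and> w \<notin> Cy}"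
  define J' where "J' = {(Hat v, 0::nat) | v. v \<in> K \<and> v \<notin> Cy} \<union> {(Hat u, Suc (D (f u))) | u. u \<in> K \<and> u \<notin> Cy}"
  define g' where "g' j = gsh (fst j) (snd j - 1)" for j :: "'a set \<times> nat"
  have Kne: "K \<noteq> {}" using c0_Cy Cy_K by blast
  have KC: "\<forall>K0\<in>KC. core0 A f K0"
  proof
    fix K0 assume "K0 \<in> KC"
    then consider "K0 = Cy" | w where "K0 = Hat w" "w \<in> K" "w \<notin> Cy" unfolding KC_def by blast
    then show "core0 A f K0" using Cy_core0 Hat_core0 by cases auto
  qed
  have cover: "\<forall>w\<in>K. \<exists>K0\<in>KC. w \<in> K0"
  proof
    fix w assume w: "w \<in> K"
    show "\<exists>K0\<in>KC. w \<in> K0"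
    proof (cases "w \<in> Cy")
      case True
      have "Cy \<in> KC" unfolding KC_def by simp
      then show ?thesis using True by blast
    next
      case False
      have "Hat w \<in> KC" unfolding KC_def using w False by blast
      then show ?thesis using Hat_w[OF w False] by blast
    qed
  qed
  have J'1: "\<forall>j\<in>J'. retract A f (fst j) \<and> S_class (fst j) f"
  proof
    fix j assume "j \<in> J'"
    then obtain w where w: "w \<in> K" "w \<notin> Cy" "fst j = Hat w" unfolding J'_def by auto
    show "retract A f (fst j) \<and> S_class (fst j) f"
      using core0_props(2,3)[OF Hat_core0[OF w(1,2)]] w(3) unfolding S_class_def by simp
  qed
  have J'2: "\<forall>j\<in>J'. snd j \<noteq> 0 \<longrightarrow> (\<forall>x\<in>A. g' j x \<in> fst j \<and> g' j (f x) = f (g' j x))"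
  proof (rule ballI, rule impI)
    fix j assume j: "j \<in> J'" "snd j \<noteq> 0"
    then obtain u where u: "u \<in> K" "u \<notin> Cy" "j = (Hat u, Suc (D (f u)))" unfolding J'_def by auto
    have "g' j = gsh (Hat u) (D (f u))" unfolding g'_def u(3) by (rule ext) simp
    then show "\<forall>x\<in>A. g' j x \<in> fst j \<and> g' j (f x) = f (g' j x)" using gsh_hom[OF u(1,2)] u(3) by simp
  qed
  have sep: "\<forall>u\<in>K. \<forall>v\<in>K. f u = f v \<and> u \<noteq> v \<longrightarrow> (\<exists>j\<in>J'. (if snd j = 0 then retr A f (fst j) else g' j) u \<noteq>
        (if snd j = 0 then retr A f (fst j) else g' j) v)"
  proof (intro ballI impI)
    fix u v assume uK: "u \<in> K" and vK: "v \<in> K" and uv: "f u = f v \<and> u \<noteq> v"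
    have hatsep: "\<exists>j\<in>J'. (if snd j = 0 then retr A f (fst j) else g' j) a \<noteq>
        (if snd j = 0 then retr A f (fst j) else g' j) b"
      if ab: "a \<in> Cy" "b \<in> K" "b \<notin> Cy" "a \<noteq> b" for a b
    proof -
      have j: "(Hat b, 0) \<in> J'" using ab unfolding J'_def by blast
      have R: "isret A f (Hat b) (retr A f (Hat b))"
        using retr_isret core0_props(2)[OF Hat_core0[OF ab(2,3)]] by blast
      have "retr A f (Hat b) a = a" "retr A f (Hat b) b = b"
        using R Cy_Hat[OF ab(2,3)] Hat_w[OF ab(2,3)] ab(1) unfolding isret_def by auto
      then show ?thesis using j ab(4) by force
    qed
    consider "u \<in> Cy" "v \<in> Cy" | "u \<in> Cy" "v \<notin> Cy" | "u \<notin> Cy" "v \<in> Cy" | "u \<notin> Cy" "v \<notin> Cy" by blast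
    then show "\<exists>j\<in>J'. (if snd j = 0 then retr A f (fst j) else g' j) u \<noteq>
        (if snd j = 0 then retr A f (fst j) else g' j) v"
    proof cases
      case 1 then show ?thesis using Cy_sib uv by blast
    next
      case 2 then show ?thesis using hatsep[of u v] vK uv by blast
    next
      case 3
      obtain j where "j \<in> J'" "(if snd j = 0 then retr A f (fst j) else g' j) v \<noteq>
        (if snd j = 0 then retr A f (fst j) else g' j) u" using hatsep[of v u] uK uv 3 by blast
      then show ?thesis by metis
    next
      case 4
      have j: "(Hat u, Suc (D (f u))) \<in> J'" using uK 4 unfolding J'_def by blast
      have "g' (Hat u, Suc (D (f u))) u \<noteq> g' (Hat u, Suc (D (f u))) v"
        using gsh_sep[OF uK 4(1) vK 4(2)] uv unfolding g'_def by simp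
      then show ?thesis using j by force
    qed
  qed
  show ?thesis using core_assemble[OF Kne KC cover J'1 J'2 sep] .
qed

end

theorem lemma4p7:
  fixes A :: "'a set" and f :: "'a \<Rightarrow> 'a"
  assumes "mono_alg A f" and "connected_alg A f"
  shows "\<exists>\<B> :: 'a set set. (\<forall>M\<in>\<B>. retract A f M \<and> S_class M f) \<and>
           in_V \<B> f A f \<and> (\<forall>M\<in>\<B>. in_V {A} f M f)"
proof -
  interpret ca A f
    using assms unfolding mono_alg_def connected_alg_def by unfold_locales auto
  show ?thesis
  proof (cases "Ainf A f = {}")
    case True then show ?thesis using caseT by blast
  next
    case Kne: False
    show ?thesis
    proof (cases "\<exists>c\<in>A. \<exists>p. (f ^^ Suc p) c = c")
      case True
      then obtain c p where cp: "c \<in> A" "(f ^^ Suc p) c = c" by blast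
      interpret cac A f c p using cp by unfold_locales auto
      show ?thesis using caseC by blast
    next
      case False
      then have "\<forall>z\<in>A. \<forall>n. (f ^^ Suc n) z \<noteq> z" by blast
      then show ?thesis using caseL Kne by blast
    qed
  qed
qed


end
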